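(* Let $\tfrac12<\alpha\le\tfrac32$, $T_{\rm p}=\tfrac{2\alpha-1}{4}\log m$, let $\beta>0,\delta'>0$ be fixed small constants, $\alpha_2=(2\alpha-1)\delta'$, $T_{\rm d}=\inf\{t\ge T_{\rm p}: K(t)\le0 \text{ or } K'(t)\le0\text{ or } 1-K(t)\le\beta\}$ and $T_2=\inf\{t\ge0: q_{\max}(t)\ge m^{-(\frac12-\alpha_2)}\}$. Then for every $\delta\in(0,1)$ there exist $M,C$ (independent of $m$) such that for all $m\ge M$, with probability at least $1-\delta$ over the initialization, for all $T_{\rm p}\le t\le\min\{T_{\rm d},T_2,\tfrac{2\alpha-1}{2-\delta'}\log m\}$ and all $i\in\{2,\dots,d\}$, $$\Big(\sum_{k=1}^m (w_k^i(t))^2\Big)^{1/2}\le C\max\Big\{\frac{1}{m^{\frac{2\alpha-1}{2}}},\ \frac{\log m}{m^{1-5\alpha_2}}\Big\}.$$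
   Context: Fix integers $d\ge2$, $m\ge2$. Network $f_\theta(x)=\sum_{k=1}^m a_k\sigma(w_k^{T}x)$ with $\theta=(a_k,w_k)_{k=1}^m$, $w_k=(w_k^1,\dots,w_k^d)^T$; risk $R(\theta)=\tfrac12\int(f_\theta-f)^2\rho\,dx$, where $\rho$ is a compactly supported probability density on $\mathbb R^d$ with $\int x_i^2\rho=1$, $\int x_ix_j\rho=0$ ($i\neq j$); $f$ is bounded on $\mathrm{supp}\,\rho$ with $\int f(x)x\rho(x)dx=(1,0,\dots,0)^T$; $\sigma$ is three times differentiable with $\sigma(0)=0,\sigma'(0)=1,\sigma''(0)=0$, $|\sigma'''|\le C_{\rm L}$. Initialization: independent $a_k(0)\sim N(0,m^{-2\alpha})$, $w_k(0)\sim N(0,m^{-2\alpha}I_d)$; $\theta(t)$ solves $\dot\theta=-\nabla R(\theta)$. $q_{\max}(t)=\max_{k,i}\{|a_k(t)|,|w_k^i(t)|\}$, $K(t)=\sum_k a_k(t)w_k^1(t)$, $K'(t)=\sum_k(a_k(t)^2+w_k^1(t)^2)$. $\log$ is natural. $M$ may depend on $\beta,\delta',\delta$. *)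

theory Defs
  imports "HOL-Probability.Probability"
begin

text \<open>Input space R^d: functions nat => real, coordinates 1..d, with Lebesgue product measure.\<close>
definition xspace :: "nat \<Rightarrow> (nat \<Rightarrow> real) measure" where
  "xspace d = PiM {1..d} (\<lambda>_. lborel)"

text \<open>Parameters theta :: nat \<times> nat => real; theta (k,0) = a_k, theta (k,i) = w_k^i (1 \<le> i \<le> d), k < m.\<close>
definition param_idx :: "nat \<Rightarrow> nat \<Rightarrow> (nat \<times> nat) set" where
  "param_idx d m = {..<m} \<times> {0..d}"

definition net :: "nat \<Rightarrow> nat \<Rightarrow> (real \<Rightarrow> real) \<Rightarrow> (nat \<times> nat \<Rightarrow> real) \<Rightarrow> (nat \<Rightarrow> real) \<Rightarrow> real" where
  "net d m \<sigma> \<theta> x = (\<Sum>k<m. \<theta> (k,0) * \<sigma> (\<Sum>i=1..d. \<theta> (k,i) * x i))"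

definition risk :: "nat \<Rightarrow> nat \<Rightarrow> (real \<Rightarrow> real) \<Rightarrow> ((nat \<Rightarrow> real) \<Rightarrow> real) \<Rightarrow> ((nat \<Rightarrow> real) \<Rightarrow> real)
    \<Rightarrow> (nat \<times> nat \<Rightarrow> real) \<Rightarrow> real" where
  "risk d m \<sigma> \<rho> f \<theta> = 1/2 * (\<integral>x. (net d m \<sigma> \<theta> x - f x)^2 * \<rho> x \<partial>xspace d)"

definition gradR :: "nat \<Rightarrow> nat \<Rightarrow> (real \<Rightarrow> real) \<Rightarrow> ((nat \<Rightarrow> real) \<Rightarrow> real) \<Rightarrow> ((nat \<Rightarrow> real) \<Rightarrow> real)
    \<Rightarrow> (nat \<times> nat \<Rightarrow> real) \<Rightarrow> nat \<times> nat \<Rightarrow> real" where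
  "gradR d m \<sigma> \<rho> f \<theta> j = deriv (\<lambda>s. risk d m \<sigma> \<rho> f (\<theta>(j := s))) (\<theta> j)"

text \<open>Initialization: all m(d+1) parameters iid N(0, m^(-2 alpha)) (standard deviation m^(-alpha)).\<close>
definition init_measure :: "nat \<Rightarrow> nat \<Rightarrow> real \<Rightarrow> (nat \<times> nat \<Rightarrow> real) measure" where
  "init_measure d m \<alpha> = PiM (param_idx d m) (\<lambda>_. density lborel (normal_density 0 (real m powr (-\<alpha>))))"

definition qmax :: "nat \<Rightarrow> nat \<Rightarrow> (nat \<times> nat \<Rightarrow> real) \<Rightarrow> real" where
  "qmax d m \<theta> = Max ((\<lambda>j. \<bar>\<theta> j\<bar>) ` param_idx d m)"

definition Kfun :: "nat \<Rightarrow> (nat \<times> nat \<Rightarrow> real) \<Rightarrow> real" where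
  "Kfun m \<theta> = (\<Sum>k<m. \<theta> (k,0) * \<theta> (k,1))"

definition K'fun :: "nat \<Rightarrow> (nat \<times> nat \<Rightarrow> real) \<Rightarrow> real" where
  "K'fun m \<theta> = (\<Sum>k<m. \<theta> (k,0)^2 + \<theta> (k,1)^2)"

text \<open>inf {t \<ge> t0. P t} in the extended reals (inf of the empty set = +infinity).\<close>
definition first_time :: "(real \<Rightarrow> bool) \<Rightarrow> real \<Rightarrow> ereal" where
  "first_time P t0 = Inf (ereal ` {t. t0 \<le> t \<and> P t})"

end

theory Submission
  imports Defs
begin
locale setting =
  fixes d :: nat and \<rho> f :: "(nat \<Rightarrow> real) \<Rightarrow> real"
    and \<sigma> \<sigma>1 \<sigma>2 \<sigma>3 :: "real \<Rightarrow> real" and CL :: real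
  assumes d2: "d \<ge> 2"
    and rho_meas: "\<rho> \<in> borel_measurable (xspace d)"
    and rho_nonneg: "\<And>x. x \<in> space (xspace d) \<Longrightarrow> \<rho> x \<ge> 0"
    and rho_prob: "(\<integral>x. \<rho> x \<partial>xspace d) = 1"
    and rho_cpt: "\<exists>r. \<forall>x\<in>space (xspace d). (\<exists>i\<in>{1..d}. r < \<bar>x i\<bar>) \<longrightarrow> \<rho> x = 0"
    and rho_second: "\<And>i. i \<in> {1..d} \<Longrightarrow> (\<integral>x. (x i)^2 * \<rho> x \<partial>xspace d) = 1"
    and rho_cross: "\<And>i j. i \<in> {1..d} \<Longrightarrow> j \<in> {1..d} \<Longrightarrow> i \<noteq> j \<Longrightarrow>
                      (\<integral>x. x i * x j * \<rho> x \<partial>xspace d) = 0"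
    and f_meas: "f \<in> borel_measurable (xspace d)"
    and f_bdd: "\<exists>B. \<forall>x\<in>space (xspace d). \<rho> x \<noteq> 0 \<longrightarrow> \<bar>f x\<bar> \<le> B"
    and f_corr: "\<And>i. i \<in> {2..d} \<Longrightarrow> (\<integral>x. f x * x i * \<rho> x \<partial>xspace d) = 0"
    and sig1: "\<And>z. (\<sigma> has_real_derivative \<sigma>1 z) (at z)"
    and sig2: "\<And>z. (\<sigma>1 has_real_derivative \<sigma>2 z) (at z)"
    and sig3: "\<And>z. (\<sigma>2 has_real_derivative \<sigma>3 z) (at z)"
    and sig0: "\<sigma> 0 = 0" "\<sigma>1 0 = 1" "\<sigma>2 0 = 0"
    and sig3_bdd: "\<And>z. \<bar>\<sigma>3 z\<bar> \<le> CL"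
begin

lemma CL_nonneg: "0 \<le> CL" using sig3_bdd[of 0] by linarith

lemma sigma_meas[measurable]: "\<sigma> \<in> borel_measurable borel"
  by (rule borel_measurable_continuous_onI) (meson DERIV_isCont continuous_at_imp_continuous_on sig1)

lemma sigma1_meas[measurable]: "\<sigma>1 \<in> borel_measurable borel"
  by (rule borel_measurable_continuous_onI) (meson DERIV_isCont continuous_at_imp_continuous_on sig2)

lemma comp_meas[measurable]: "i \<in> {1..d} \<Longrightarrow> (\<lambda>x. x i) \<in> borel_measurable (xspace d)"
  unfolding xspace_def using measurable_component_singleton[of i "{1..d}" "\<lambda>_. lborel"] by (simp add: measurable_lborel2)

lemma rho_meas'[measurable]: "\<rho> \<in> borel_measurable (xspace d)" by (rule rho_meas)
lemma f_meas'[measurable]: "f \<in> borel_measurable (xspace d)" by (rule f_meas)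

lemma pre_meas[measurable]: "(\<lambda>x. \<Sum>j=1..d. \<theta> (k,j) * x j) \<in> borel_measurable (xspace d)"
  by (intro borel_measurable_sum borel_measurable_times borel_measurable_const) (auto intro: comp_meas)

lemma net_meas[measurable]: "net d m \<sigma> \<theta> \<in> borel_measurable (xspace d)"
  unfolding net_def by measurable


lemma rho_int: "integrable (xspace d) \<rho>"
  using rho_prob not_integrable_integral_eq by fastforce

lemma intg_bdd:
  assumes [measurable]: "h \<in> borel_measurable (xspace d)"
    and b: "\<And>x. x \<in> space (xspace d) \<Longrightarrow> \<rho> x \<noteq> 0 \<Longrightarrow> \<bar>h x\<bar> \<le> C"
  shows "integrable (xspace d) (\<lambda>x. h x * \<rho> x)"
proof (rule Bochner_Integration.integrable_bound)
  show "integrable (xspace d) (\<lambda>x. \<bar>C\<bar> * \<rho> x)" using rho_int by simp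
  show "(\<lambda>x. h x * \<rho> x) \<in> borel_measurable (xspace d)" by measurable
  show "AE x in xspace d. norm (h x * \<rho> x) \<le> norm (\<bar>C\<bar> * \<rho> x)"
  proof (rule AE_I2)
    fix x assume x: "x \<in> space (xspace d)"
    show "norm (h x * \<rho> x) \<le> norm (\<bar>C\<bar> * \<rho> x)"
    proof (cases "\<rho> x = 0")
      case False
      then have "\<bar>h x\<bar> \<le> \<bar>C\<bar>" using b[OF x] by linarith
      then show ?thesis using rho_nonneg[OF x] by (simp add: abs_mult mult_right_mono)
    qed simp
  qed
qed

lemma int_bdd:
  assumes [measurable]: "h \<in> borel_measurable (xspace d)"
    and b: "\<And>x. x \<in> space (xspace d) \<Longrightarrow> \<rho> x \<noteq> 0 \<Longrightarrow> \<bar>h x\<bar> \<le> C"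
  shows "\<bar>\<integral>x. h x * \<rho> x \<partial>xspace d\<bar> \<le> C"
proof -
  have i1: "integrable (xspace d) (\<lambda>x. h x * \<rho> x)" by (rule intg_bdd[OF assms])
  have "\<bar>\<integral>x. h x * \<rho> x \<partial>xspace d\<bar> \<le> (\<integral>x. \<bar>h x * \<rho> x\<bar> \<partial>xspace d)"
    using integral_norm_bound[of "xspace d" "\<lambda>x. h x * \<rho> x"] by simp
  also have "\<dots> \<le> (\<integral>x. C * \<rho> x \<partial>xspace d)"
  proof (rule integral_mono)
    show "integrable (xspace d) (\<lambda>x. \<bar>h x * \<rho> x\<bar>)" using i1 by simp
    show "integrable (xspace d) (\<lambda>x. C * \<rho> x)" using rho_int by simp
    fix x assume x: "x \<in> space (xspace d)"
    show "\<bar>h x * \<rho> x\<bar> \<le> C * \<rho> x"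
    proof (cases "\<rho> x = 0")
      case False
      then show ?thesis using b[OF x False] rho_nonneg[OF x] by (simp add: abs_mult mult_right_mono)
    qed simp
  qed
  also have "\<dots> = C" using rho_prob by simp
  finally show ?thesis .
qed

definition "rr = (SOME r. 1 \<le> r \<and> (\<forall>x\<in>space (xspace d). \<rho> x \<noteq> 0 \<longrightarrow> (\<forall>j\<in>{1..d}. \<bar>x j\<bar> \<le> r)))"
definition "BB = (SOME B. 0 \<le> B \<and> (\<forall>x\<in>space (xspace d). \<rho> x \<noteq> 0 \<longrightarrow> \<bar>f x\<bar> \<le> B))"

lemma rr: "1 \<le> rr" "\<And>x j. x\<in>space (xspace d) \<Longrightarrow> \<rho> x \<noteq> 0 \<Longrightarrow> j\<in>{1..d} \<Longrightarrow> \<bar>x j\<bar> \<le> rr"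
proof -
  obtain r where r: "\<forall>x\<in>space (xspace d). (\<exists>i\<in>{1..d}. r < \<bar>x i\<bar>) \<longrightarrow> \<rho> x = 0" using rho_cpt by blast
  have "\<exists>r. 1 \<le> r \<and> (\<forall>x\<in>space (xspace d). \<rho> x \<noteq> 0 \<longrightarrow> (\<forall>j\<in>{1..d}. \<bar>x j\<bar> \<le> r))"
    by (rule exI[of _ "max 1 r"]) (use r in force)
  from someI_ex[OF this] show "1 \<le> rr" "\<And>x j. x\<in>space (xspace d) \<Longrightarrow> \<rho> x \<noteq> 0 \<Longrightarrow> j\<in>{1..d} \<Longrightarrow> \<bar>x j\<bar> \<le> rr"
    unfolding rr_def by blast+
qed

lemma BB: "0 \<le> BB" "\<And>x. x\<in>space (xspace d) \<Longrightarrow> \<rho> x \<noteq> 0 \<Longrightarrow> \<bar>f x\<bar> \<le> BB"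
proof -
  obtain B where B: "\<forall>x\<in>space (xspace d). \<rho> x \<noteq> 0 \<longrightarrow> \<bar>f x\<bar> \<le> B" using f_bdd by blast
  have "\<exists>B. 0 \<le> B \<and> (\<forall>x\<in>space (xspace d). \<rho> x \<noteq> 0 \<longrightarrow> \<bar>f x\<bar> \<le> B)"
    by (rule exI[of _ "max 0 B"]) (use B in force)
  from someI_ex[OF this] show "0 \<le> BB" "\<And>x. x\<in>space (xspace d) \<Longrightarrow> \<rho> x \<noteq> 0 \<Longrightarrow> \<bar>f x\<bar> \<le> BB"
    unfolding BB_def by blast+
qed

definition dif :: "nat \<Rightarrow> real \<Rightarrow> real" where "dif n = (if n = 0 then \<sigma> else if n = 1 then \<sigma>1 else if n = 2 then \<sigma>2 else \<sigma>3)"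

lemma dif_deriv: "n < 3 \<Longrightarrow> DERIV (dif n) t :> dif (Suc n) t"
  by (cases n; cases "n - 1"; auto simp: dif_def sig1 sig2 sig3 numeral_eq_Suc)

lemma taylor_gen:
  assumes "0 < n" "n + k \<le> 3"
  shows "\<exists>t. \<bar>t - c\<bar> \<le> \<bar>x - c\<bar> \<and> dif k x = (\<Sum>j<n. dif (j+k) c / fact j * (x - c)^j) + dif (n+k) t / fact n * (x - c)^n"
proof (cases "x = c")
  case True
  then show ?thesis using assms by (auto intro!: exI[of _ c] simp: sum.remove[of "{..<n}" 0] zero_power)
next
  case False
  let ?D = "\<lambda>j. dif (j + k)"
  have "\<exists>t. (if x < c then x < t \<and> t < c else c < t \<and> t < x) \<and>
    dif k x = (\<Sum>j<n. (?D j c / fact j) * (x - c)^j) + (?D n t / fact n) * (x - c)^n"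
    apply (rule Taylor[where a="min x c" and b="max x c"])
    using assms False by (auto intro!: dif_deriv)
  then obtain t where t1: "if x < c then x < t \<and> t < c else c < t \<and> t < x"
    and t2: "dif k x = (\<Sum>j<n. (?D j c / fact j) * (x - c)^j) + (?D n t / fact n) * (x - c)^n" by blast
  have "\<bar>t - c\<bar> \<le> \<bar>x - c\<bar>" using t1 by (auto split: if_splits)
  then show ?thesis using t2 by blast
qed

end



lemma deriv_int:
  fixes g :: "real \<Rightarrow> 'x \<Rightarrow> real"
  assumes w: "integrable M w" and gi: "\<And>s. integrable M (g s)" and Di: "integrable M D"
    and bd: "\<And>s x. x \<in> space M \<Longrightarrow> \<bar>s - s0\<bar> \<le> 1 \<Longrightarrow> \<bar>g s x - g s0 x - (s - s0) * D x\<bar> \<le> K * (s - s0)^2 * w x"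
  shows "((\<lambda>s. \<integral>x. g s x \<partial>M) has_real_derivative (\<integral>x. D x \<partial>M)) (at s0)"
proof -
  let ?F = "\<lambda>s. \<integral>x. g s x \<partial>M"
  let ?W = "\<integral>x. w x \<partial>M"
  have key: "\<bar>?F s - ?F s0 - (s - s0) * (\<integral>x. D x \<partial>M)\<bar> \<le> K * (s - s0)^2 * ?W" if s: "\<bar>s - s0\<bar> \<le> 1" for s
  proof -
    have "?F s - ?F s0 - (s - s0) * (\<integral>x. D x \<partial>M) = (\<integral>x. g s x - g s0 x - (s - s0) * D x \<partial>M)"
      using gi Di by simp
    also have "\<bar>\<dots>\<bar> \<le> (\<integral>x. \<bar>g s x - g s0 x - (s - s0) * D x\<bar> \<partial>M)"
      using integral_norm_bound[of M "\<lambda>x. g s x - g s0 x - (s - s0) * D x"] by simp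
    also have "\<dots> \<le> (\<integral>x. K * (s - s0)^2 * w x \<partial>M)"
      by (rule integral_mono) (use gi Di w bd s in auto)
    also have "\<dots> = K * (s - s0)^2 * ?W" by simp
    finally show ?thesis .
  qed
  have "((\<lambda>s. (?F s - ?F s0) / (s - s0) - (\<integral>x. D x \<partial>M)) \<longlongrightarrow> 0) (at s0)"
  proof (rule Lim_null_comparison)
    show "((\<lambda>s. \<bar>K * ?W\<bar> * \<bar>s - s0\<bar>) \<longlongrightarrow> 0) (at s0)"
      by (rule tendsto_eq_intros refl)+ simp
    have "eventually (\<lambda>s. \<bar>s - s0\<bar> < 1 \<and> s \<noteq> s0) (at s0)"
      unfolding eventually_at by (rule exI[of _ 1]) (auto simp: dist_real_def)
    then show "eventually (\<lambda>s. norm ((?F s - ?F s0) / (s - s0) - (\<integral>x. D x \<partial>M)) \<le> \<bar>K * ?W\<bar> * \<bar>s - s0\<bar>) (at s0)"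
    proof eventually_elim
      case (elim s)
      then have ne: "s - s0 \<noteq> 0" by simp
      have "(?F s - ?F s0) / (s - s0) - (\<integral>x. D x \<partial>M) = (?F s - ?F s0 - (s - s0) * (\<integral>x. D x \<partial>M)) / (s - s0)"
        using ne by (simp add: field_simps)
      also have "norm \<dots> \<le> K * (s - s0)^2 * ?W / \<bar>s - s0\<bar>"
        using key[of s] elim ne by (simp add: abs_divide divide_right_mono)
      also have "\<dots> = (K * ?W) * \<bar>s - s0\<bar>"
      proof -
        define a where "a = \<bar>s - s0\<bar>"
        have a: "a \<noteq> 0" using ne a_def by simp
        have e: "(s - s0)^2 = a * a" unfolding a_def by (simp add: power2_eq_square)
        show ?thesis unfolding e a_def[symmetric] using a by (simp add: field_simps)
      qed
      also have "\<dots> \<le> \<bar>K * ?W\<bar> * \<bar>s - s0\<bar>"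
        by (rule mult_right_mono) auto
      finally show ?case .
    qed
  qed
  then have "((\<lambda>s. (?F s - ?F s0) / (s - s0)) \<longlongrightarrow> (\<integral>x. D x \<partial>M)) (at s0)"
    using Lim_transform tendsto_const by (simp add: LIM_zero_iff)
  then show ?thesis by (simp add: has_field_derivative_iff)
qed


definition pre :: "nat \<Rightarrow> (nat \<times> nat \<Rightarrow> real) \<Rightarrow> nat \<Rightarrow> (nat \<Rightarrow> real) \<Rightarrow> real" where
  "pre d \<theta> k x = (\<Sum>j=1..d. \<theta> (k,j) * x j)"

lemma pre_upd: "i \<in> {1..d} \<Longrightarrow> pre d (\<theta>((k,i):=s)) k x = pre d \<theta> k x + (s - \<theta>(k,i)) * x i"
proof -
  assume i: "i \<in> {1..d}"
  have "pre d (\<theta>((k,i):=s)) k x - pre d \<theta> k x = (\<Sum>j=1..d. (\<theta>((k,i):=s)) (k,j) * x j - \<theta> (k,j) * x j)"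
    unfolding pre_def by (simp add: sum_subtractf)
  also have "\<dots> = (\<Sum>j=1..d. if j = i then (s - \<theta>(k,i)) * x i else 0)"
    by (rule sum.cong) (auto simp: algebra_simps)
  also have "\<dots> = (s - \<theta>(k,i)) * x i" using i by simp
  finally show ?thesis by simp
qed

lemma pre_upd_other: "k' \<noteq> k \<Longrightarrow> pre d (\<theta>((k,i):=s)) k' x = pre d \<theta> k' x"
  unfolding pre_def by simp

lemma net_pre: "net d m \<sigma> \<theta> x = (\<Sum>k<m. \<theta> (k,0) * \<sigma> (pre d \<theta> k x))"
  unfolding net_def pre_def by simp

lemma net_upd:
  assumes "k < m" "i \<in> {1..d}"
  shows "net d m \<sigma> (\<theta>((k,i):=s)) x = net d m \<sigma> \<theta> x + \<theta>(k,0) * (\<sigma> (pre d \<theta> k x + (s - \<theta>(k,i)) * x i) - \<sigma> (pre d \<theta> k x))"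
proof -
  have i0: "i \<noteq> 0" using assms by auto
  have "net d m \<sigma> (\<theta>((k,i):=s)) x - net d m \<sigma> \<theta> x =
     (\<Sum>k'<m. (\<theta>((k,i):=s)) (k',0) * \<sigma> (pre d (\<theta>((k,i):=s)) k' x) - \<theta> (k',0) * \<sigma> (pre d \<theta> k' x))"
    unfolding net_pre by (simp add: sum_subtractf)
  also have "\<dots> = (\<Sum>k'<m. if k' = k then \<theta>(k,0) * (\<sigma> (pre d \<theta> k x + (s - \<theta>(k,i)) * x i) - \<sigma> (pre d \<theta> k x)) else 0)"
    by (rule sum.cong) (use i0 assms in \<open>auto simp: pre_upd pre_upd_other algebra_simps\<close>)
  also have "\<dots> = \<theta>(k,0) * (\<sigma> (pre d \<theta> k x + (s - \<theta>(k,i)) * x i) - \<sigma> (pre d \<theta> k x))"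
    using assms by simp
  finally show ?thesis by simp
qed

context setting
begin

lemma T_sig: "\<bar>\<sigma> z - z\<bar> \<le> CL / 6 * \<bar>z\<bar>^3"
proof -
  obtain t where t: "dif 0 z = (\<Sum>j<3. dif (j+0) 0 / fact j * (z - 0)^j) + dif (3+0) t / fact 3 * (z - 0)^3"
    using taylor_gen[of 3 0 0 z] by auto
  then have E: "\<sigma> z - z = \<sigma>3 t / 6 * z^3"
    by (simp add: dif_def numeral_3_eq_3 lessThan_Suc sig0 fact_numeral)
  then have "\<bar>\<sigma> z - z\<bar> = \<bar>\<sigma>3 t\<bar> / 6 * \<bar>z\<bar>^3" unfolding E by (simp add: abs_mult power_abs)
  also have "\<dots> \<le> CL / 6 * \<bar>z\<bar>^3" by (intro mult_right_mono divide_right_mono sig3_bdd) auto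
  finally show ?thesis .
qed

lemma T_sig1: "\<bar>\<sigma>1 z - 1\<bar> \<le> CL / 2 * z^2"
proof -
  obtain t where t: "dif 1 z = (\<Sum>j<2. dif (j+1) 0 / fact j * (z - 0)^j) + dif (2+1) t / fact 2 * (z - 0)^2"
    using taylor_gen[of 2 1 0 z] by auto
  then have E: "\<sigma>1 z - 1 = \<sigma>3 t / 2 * z^2"
    by (simp add: dif_def numeral_2_eq_2 lessThan_Suc sig0)
  then have "\<bar>\<sigma>1 z - 1\<bar> = \<bar>\<sigma>3 t\<bar> / 2 * z^2" unfolding E by (simp add: abs_mult)
  also have "\<dots> \<le> CL / 2 * z^2" by (intro mult_right_mono divide_right_mono sig3_bdd) auto
  finally show ?thesis .
qed

lemma T_sig2: "\<bar>\<sigma>2 z\<bar> \<le> CL * \<bar>z\<bar>"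
proof -
  obtain t where t: "dif 2 z = (\<Sum>j<1. dif (j+2) 0 / fact j * (z - 0)^j) + dif (1+2) t / fact 1 * (z - 0)^1"
    using taylor_gen[of 1 2 0 z] by auto
  then have E: "\<sigma>2 z = \<sigma>3 t * z"
    by (simp add: dif_def sig0)
  then have "\<bar>\<sigma>2 z\<bar> = \<bar>\<sigma>3 t\<bar> * \<bar>z\<bar>" unfolding E by (simp add: abs_mult)
  also have "\<dots> \<le> CL * \<bar>z\<bar>" by (intro mult_right_mono sig3_bdd) auto
  finally show ?thesis .
qed

lemma T_gen: "\<bar>\<sigma> (z0 + e) - \<sigma> z0 - \<sigma>1 z0 * e\<bar> \<le> CL * (\<bar>z0\<bar> + \<bar>e\<bar>) / 2 * e^2"
proof -
  obtain t where t: "\<bar>t - z0\<bar> \<le> \<bar>z0 + e - z0\<bar>" "dif 0 (z0+e) = (\<Sum>j<2. dif (j+0) z0 / fact j * (z0 + e - z0)^j) + dif (2+0) t / fact 2 * (z0 + e - z0)^2"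
    using taylor_gen[of 2 0 z0 "z0+e"] by auto
  then have E: "\<sigma> (z0 + e) - \<sigma> z0 - \<sigma>1 z0 * e = \<sigma>2 t / 2 * e^2"
    by (simp add: dif_def numeral_2_eq_2 lessThan_Suc)
  then have "\<bar>\<sigma> (z0 + e) - \<sigma> z0 - \<sigma>1 z0 * e\<bar> = \<bar>\<sigma>2 t\<bar> / 2 * e^2" unfolding E by (simp add: abs_mult)
  also have "\<dots> \<le> CL * (\<bar>z0\<bar> + \<bar>e\<bar>) / 2 * e^2"
  proof -
    have "\<bar>t\<bar> \<le> \<bar>z0\<bar> + \<bar>e\<bar>" using t(1) by simp
    then have "\<bar>\<sigma>2 t\<bar> \<le> CL * (\<bar>z0\<bar> + \<bar>e\<bar>)" using T_sig2[of t] CL_nonneg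
      by (meson mult_left_mono order_trans)
    then show ?thesis by (intro mult_right_mono divide_right_mono) auto
  qed
  finally show ?thesis .
qed

lemma sig_bd: "\<bar>z\<bar> \<le> Z \<Longrightarrow> \<bar>\<sigma> z\<bar> \<le> Z + CL / 6 * Z^3"
proof -
  assume z: "\<bar>z\<bar> \<le> Z"
  have "\<bar>z\<bar>^3 \<le> Z^3" using z by (intro power_mono) auto
  then have "CL / 6 * \<bar>z\<bar>^3 \<le> CL / 6 * Z^3" using CL_nonneg by (intro mult_left_mono) auto
  then show ?thesis using T_sig[of z] z by linarith
qed

lemma sig1_bd: "\<bar>z\<bar> \<le> Z \<Longrightarrow> \<bar>\<sigma>1 z\<bar> \<le> 1 + CL / 2 * Z^2"
proof -
  assume z: "\<bar>z\<bar> \<le> Z"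
  have "z^2 \<le> Z^2" using z by (metis abs_le_square_iff abs_of_nonneg abs_ge_zero order_trans power2_abs)
  then have "CL / 2 * z^2 \<le> CL / 2 * Z^2" using CL_nonneg by (intro mult_left_mono) auto
  then show ?thesis using T_sig1[of z] by linarith
qed


definition bos :: "((nat\<Rightarrow>real)\<Rightarrow>real) \<Rightarrow> bool" where
  "bos h \<longleftrightarrow> (\<exists>C. \<forall>x\<in>space (xspace d). \<rho> x \<noteq> 0 \<longrightarrow> \<bar>h x\<bar> \<le> C)"

lemma bos_const[intro]: "bos (\<lambda>x. c)" unfolding bos_def by auto
lemma bos_comp: "i \<in> {1..d} \<Longrightarrow> bos (\<lambda>x. x i)" unfolding bos_def using rr(2) by blast
lemma bos_f: "bos f" unfolding bos_def using BB(2) by blast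
lemma bos_add: "bos g \<Longrightarrow> bos h \<Longrightarrow> bos (\<lambda>x. g x + h x)"
  unfolding bos_def by (metis (no_types, lifting) abs_triangle_ineq add_mono order_trans)
lemma bos_diff: "bos g \<Longrightarrow> bos h \<Longrightarrow> bos (\<lambda>x. g x - h x)"
  unfolding bos_def by (metis (no_types, lifting) abs_triangle_ineq4 add_mono order_trans)
lemma bos_mult: "bos g \<Longrightarrow> bos h \<Longrightarrow> bos (\<lambda>x. g x * h x)"
proof -
  assume "bos g" "bos h"
  then obtain C1 C2 where c1: "\<forall>x\<in>space (xspace d). \<rho> x \<noteq> 0 \<longrightarrow> \<bar>g x\<bar> \<le> C1"
    and c2: "\<forall>x\<in>space (xspace d). \<rho> x \<noteq> 0 \<longrightarrow> \<bar>h x\<bar> \<le> C2" unfolding bos_def by blast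
  have "\<bar>g x * h x\<bar> \<le> C1 * C2" if "x\<in>space (xspace d)" "\<rho> x \<noteq> 0" for x
    using c1 c2 that unfolding abs_mult by (meson abs_ge_zero mult_mono order_trans)
  then show ?thesis unfolding bos_def by blast
qed
lemma bos_sum: "finite J \<Longrightarrow> (\<And>j. j \<in> J \<Longrightarrow> bos (h j)) \<Longrightarrow> bos (\<lambda>x. \<Sum>j\<in>J. h j x)"
proof (induction J rule: finite_induct)
  case empty then show ?case using bos_const[of 0] by simp
next
  case (insert a F) then show ?case by (simp add: bos_add)
qed
lemma bos_sig: "bos h \<Longrightarrow> bos (\<lambda>x. \<sigma> (h x))"
  unfolding bos_def using sig_bd by blast
lemma bos_sig1: "bos h \<Longrightarrow> bos (\<lambda>x. \<sigma>1 (h x))"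
  unfolding bos_def using sig1_bd by blast

lemma bos_pre: "bos (pre d \<theta> k)"
  unfolding pre_def by (intro bos_sum bos_mult bos_const bos_comp) auto

lemma pre_meas2[measurable]: "pre d \<theta> k \<in> borel_measurable (xspace d)"
  unfolding pre_def by measurable

lemma bos_net: "bos (net d m \<sigma> \<theta>)"
  unfolding net_pre by (intro bos_sum bos_mult bos_const bos_sig bos_pre) auto

lemma intg_bos: "h \<in> borel_measurable (xspace d) \<Longrightarrow> bos h \<Longrightarrow> integrable (xspace d) (\<lambda>x. h x * \<rho> x)"
  unfolding bos_def using intg_bdd by blast


lemma grad_formula:
  assumes k: "k < m" and i: "i \<in> {1..d}"
  shows "gradR d m \<sigma> \<rho> f \<theta> (k,i) = (\<integral>x. (net d m \<sigma> \<theta> x - f x) * \<theta>(k,0) * \<sigma>1 (pre d \<theta> k x) * x i * \<rho> x \<partial>xspace d)"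
proof -
  define s0 where "s0 = \<theta>(k,i)"
  define g where "g s x = (net d m \<sigma> (\<theta>((k,i):=s)) x - f x) * (net d m \<sigma> (\<theta>((k,i):=s)) x - f x) * \<rho> x" for s x
  define hD where "hD x = (net d m \<sigma> \<theta> x - f x) * \<theta>(k,0) * \<sigma>1 (pre d \<theta> k x) * x i" for x
  define D where "D x = 2 * (hD x * \<rho> x)" for x
  obtain H where H: "\<And>x. x\<in>space (xspace d) \<Longrightarrow> \<rho> x \<noteq> 0 \<Longrightarrow> \<bar>net d m \<sigma> \<theta> x - f x\<bar> \<le> H"
    using bos_diff[OF bos_net bos_f, of m \<theta>] unfolding bos_def by blast
  obtain Z where Z: "\<And>x. x\<in>space (xspace d) \<Longrightarrow> \<rho> x \<noteq> 0 \<Longrightarrow> \<bar>pre d \<theta> k x\<bar> \<le> Z"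
    using bos_pre[of \<theta> k] unfolding bos_def by blast
  define a where "a = \<theta>(k,0)"
  define b1 where "b1 = 1 + CL/2 * Z^2"
  define Q2 where "Q2 = CL*(Z+rr)/2*rr^2"
  define P where "P = b1 * rr + Q2"
  define K where "K = a^2 * P^2 + 2*H*\<bar>a\<bar>*Q2"
  have gi: "integrable (xspace d) (g s)" for s
    unfolding g_def by (intro intg_bos bos_mult bos_diff bos_net bos_f) measurable
  have hDi: "integrable (xspace d) (\<lambda>x. hD x * \<rho> x)"
    unfolding hD_def using i by (intro intg_bos bos_mult bos_diff bos_net bos_f bos_const bos_sig1 bos_pre bos_comp) measurable
  then have Di: "integrable (xspace d) D" unfolding D_def by simp
  have bd: "\<bar>g s x - g s0 x - (s - s0) * D x\<bar> \<le> K * (s - s0)^2 * \<rho> x"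
    if x: "x \<in> space (xspace d)" and s: "\<bar>s - s0\<bar> \<le> 1" for s x
  proof (cases "\<rho> x = 0")
    case True then show ?thesis by (simp add: g_def D_def)
  next
    case False
    define z0 where "z0 = pre d \<theta> k x"
    define e where "e = (s - s0) * x i"
    define h0 where "h0 = net d m \<sigma> \<theta> x - f x"
    define Sd where "Sd = \<sigma> (z0 + e) - \<sigma> z0"
    define Rm where "Rm = Sd - \<sigma>1 z0 * e"
    have ns: "net d m \<sigma> (\<theta>((k,i):=s)) x - f x = h0 + a * Sd"
      unfolding h0_def Sd_def a_def z0_def e_def s0_def using net_upd[OF k i] by simp
    have n0: "\<theta>((k,i):=s0) = \<theta>" unfolding s0_def by simp
    have idt: "g s x - g s0 x - (s - s0) * D x = \<rho> x * (a^2 * Sd^2 + 2 * h0 * a * Rm)"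
      unfolding g_def ns n0 D_def hD_def h0_def[symmetric] a_def[symmetric] z0_def[symmetric] Rm_def e_def
      by (simp add: algebra_simps power2_eq_square)
    have xi: "\<bar>x i\<bar> \<le> rr" using rr(2)[OF x False i] .
    have s2: "(s - s0)^2 \<le> \<bar>s - s0\<bar>"
    proof -
      have "(s - s0)^2 = \<bar>s - s0\<bar> * \<bar>s - s0\<bar>" by (simp add: power2_eq_square)
      also have "\<dots> \<le> \<bar>s - s0\<bar> * 1" by (rule mult_left_mono) (use s in auto)
      finally show ?thesis by simp
    qed
    have e2: "e^2 \<le> rr^2 * (s - s0)^2"
    proof -
      have "\<bar>x i\<bar>^2 \<le> rr^2" using xi by (intro power_mono) auto
      then have "(x i)^2 \<le> rr^2" by simp
      then have "(x i)^2 * (s - s0)^2 \<le> rr^2 * (s - s0)^2" by (rule mult_right_mono) simp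
      then show ?thesis unfolding e_def power_mult_distrib by (simp only: mult.commute)
    qed
    have ea: "\<bar>e\<bar> \<le> rr * \<bar>s - s0\<bar>" unfolding e_def abs_mult using xi by (simp add: mult.commute mult_right_mono)
    have ea1: "\<bar>e\<bar> \<le> rr"
    proof -
      have "rr * \<bar>s - s0\<bar> \<le> rr * 1" by (rule mult_left_mono) (use s rr(1) in auto)
      then show ?thesis using ea by simp
    qed
    have z0b: "\<bar>z0\<bar> \<le> Z" using Z[OF x False] z0_def by simp
    have h0b: "\<bar>h0\<bar> \<le> H" using H[OF x False] h0_def by simp
    have Rmb: "\<bar>Rm\<bar> \<le> Q2 * (s - s0)^2"
    proof -
      have "\<bar>Rm\<bar> \<le> CL * (\<bar>z0\<bar> + \<bar>e\<bar>) / 2 * e^2" unfolding Rm_def Sd_def using T_gen by simp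
      also have "\<dots> \<le> CL * (Z + rr) / 2 * (rr^2 * (s - s0)^2)"
        using CL_nonneg z0b ea1 e2 by (intro mult_mono divide_right_mono mult_left_mono add_mono) auto
      finally show ?thesis unfolding Q2_def by (simp add: algebra_simps)
    qed
    have Q2nn: "0 \<le> Q2" unfolding Q2_def using CL_nonneg rr(1) z0b by (intro mult_nonneg_nonneg divide_nonneg_nonneg) auto
    have b1b: "\<bar>\<sigma>1 z0\<bar> \<le> b1" unfolding b1_def using sig1_bd[OF z0b] .
    have Sdb: "\<bar>Sd\<bar> \<le> P * \<bar>s - s0\<bar>"
    proof -
      have "Sd = \<sigma>1 z0 * e + Rm" unfolding Rm_def by simp
      then have "\<bar>Sd\<bar> \<le> \<bar>\<sigma>1 z0\<bar> * \<bar>e\<bar> + \<bar>Rm\<bar>" using abs_triangle_ineq[of "\<sigma>1 z0 * e" Rm] by (simp add: abs_mult)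
      also have "\<dots> \<le> b1 * (rr * \<bar>s - s0\<bar>) + Q2 * \<bar>s - s0\<bar>"
      proof -
        have "\<bar>\<sigma>1 z0\<bar> * \<bar>e\<bar> \<le> b1 * (rr * \<bar>s - s0\<bar>)" by (rule mult_mono) (use b1b ea in auto)
        moreover have "\<bar>Rm\<bar> \<le> Q2 * \<bar>s - s0\<bar>" using Rmb mult_left_mono[OF s2 Q2nn] by linarith
        ultimately show ?thesis by linarith
      qed
      finally show ?thesis unfolding P_def by (simp add: algebra_simps)
    qed
    have "\<bar>a^2 * Sd^2 + 2 * h0 * a * Rm\<bar> \<le> a^2 * Sd^2 + 2 * \<bar>h0\<bar> * \<bar>a\<bar> * \<bar>Rm\<bar>"
      using abs_triangle_ineq[of "a^2 * Sd^2" "2 * h0 * a * Rm"] by (simp add: abs_mult)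
    also have "\<dots> \<le> a^2 * (P^2 * (s - s0)^2) + 2 * H * \<bar>a\<bar> * (Q2 * (s - s0)^2)"
    proof -
      have "\<bar>Sd\<bar>^2 \<le> (P * \<bar>s - s0\<bar>)^2" using Sdb by (intro power_mono) auto
      then have "Sd^2 \<le> P^2 * (s - s0)^2" by (simp add: power_mult_distrib)
      then have 1: "a^2 * Sd^2 \<le> a^2 * (P^2 * (s - s0)^2)" by (rule mult_left_mono) simp
      have "\<bar>h0\<bar> * \<bar>Rm\<bar> \<le> H * (Q2 * (s - s0)^2)" by (rule mult_mono) (use h0b Rmb in auto)
      then have 2: "2 * \<bar>h0\<bar> * \<bar>a\<bar> * \<bar>Rm\<bar> \<le> 2 * H * \<bar>a\<bar> * (Q2 * (s - s0)^2)"
        using mult_left_mono[of "\<bar>h0\<bar> * \<bar>Rm\<bar>" "H * (Q2 * (s - s0)^2)" "2 * \<bar>a\<bar>"] by (simp add: algebra_simps)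
      from 1 2 show ?thesis by linarith
    qed
    also have "\<dots> = K * (s - s0)^2" unfolding K_def by (simp add: algebra_simps)
    finally have "\<bar>a^2 * Sd^2 + 2 * h0 * a * Rm\<bar> \<le> K * (s - s0)^2" .
    then show ?thesis unfolding idt abs_mult using rho_nonneg[OF x]
      by (simp add: mult.commute mult_left_mono)
  qed
  have der: "((\<lambda>s. \<integral>x. g s x \<partial>xspace d) has_real_derivative (\<integral>x. D x \<partial>xspace d)) (at s0)"
    by (rule deriv_int[OF rho_int gi Di bd])
  have rk: "risk d m \<sigma> \<rho> f (\<theta>((k,i):=s)) = 1/2 * (\<integral>x. g s x \<partial>xspace d)" for s
    unfolding risk_def g_def by (simp add: power2_eq_square)
  have der2: "((\<lambda>s. risk d m \<sigma> \<rho> f (\<theta>((k,i):=s))) has_real_derivative 1/2 * (\<integral>x. D x \<partial>xspace d)) (at s0)"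
    unfolding rk by (rule DERIV_cmult[OF der])
  have "gradR d m \<sigma> \<rho> f \<theta> (k,i) = 1/2 * (\<integral>x. D x \<partial>xspace d)"
    unfolding gradR_def s0_def[symmetric] using DERIV_imp_deriv[OF der2] by simp
  also have "\<dots> = (\<integral>x. hD x * \<rho> x \<partial>xspace d)" unfolding D_def by simp
  finally show ?thesis unfolding hD_def .
qed


lemma pre_bd:
  assumes x: "x \<in> space (xspace d)" "\<rho> x \<noteq> 0" and th: "\<And>j. j \<in> {1..d} \<Longrightarrow> \<bar>\<theta>(k,j)\<bar> \<le> Q"
  shows "\<bar>pre d \<theta> k x\<bar> \<le> d * rr * Q"
proof -
  have "\<bar>pre d \<theta> k x\<bar> \<le> (\<Sum>j=1..d. \<bar>\<theta>(k,j) * x j\<bar>)" unfolding pre_def by (rule sum_abs)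
  also have "\<dots> \<le> (\<Sum>j=1..d. Q * rr)"
  proof (rule sum_mono)
    fix j assume j: "j \<in> {1..d}"
    show "\<bar>\<theta>(k,j) * x j\<bar> \<le> Q * rr" unfolding abs_mult by (rule mult_mono) (use th[OF j] rr(2)[OF x j] in auto)
  qed
  also have "\<dots> = d * rr * Q" by simp
  finally show ?thesis .
qed

lemma intg_bos_c: "h \<in> borel_measurable (xspace d) \<Longrightarrow> bos h \<Longrightarrow> integrable (xspace d) (\<lambda>x. c * (h x * \<rho> x))"
  using intg_bos by simp

lemma bos_W: "bos (\<lambda>x. \<Sum>k<m. \<theta>(k,0) * \<theta>(k,i) * \<sigma>1 (pre d \<theta> k x))"
  by (intro bos_sum bos_mult bos_const bos_sig1 bos_pre) auto

lemma bos_L: "bos (\<lambda>x. \<Sum>j=1..d. u j * x j)"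
  by (intro bos_sum bos_mult bos_const bos_comp) auto


lemma Sdot_bound:
  assumes i: "i \<in> {2..d}" and Q: "0 < Q" "Q \<le> 1" "1 \<le> real m * Q^2"
    and th: "\<And>k j. k < m \<Longrightarrow> j \<le> d \<Longrightarrow> \<bar>\<theta>(k,j)\<bar> \<le> Q"
  shows "(\<Sum>k<m. 2 * \<theta>(k,i) * (- gradR d m \<sigma> \<rho> f \<theta> (k,i)))
     \<le> (rr*CL*(d*rr)^3/6 * m * Q^4)^2/2
       + 2 * ((BB + (d*rr + CL*(d*rr)^3/6)) * (CL*(d*rr)^2/2) * rr) * m * Q^5 * (\<Sum>k<m. \<bar>\<theta>(k,i)\<bar>)"
proof -
  have i1: "i \<in> {1..d}" using i by auto
  define N where "N = net d m \<sigma> \<theta>"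
  define W where "W x = (\<Sum>k<m. \<theta>(k,0) * \<theta>(k,i) * \<sigma>1 (pre d \<theta> k x))" for x
  define v where "v = (\<Sum>k<m. \<theta>(k,0) * \<theta>(k,i))"
  define u where "u j = (\<Sum>k<m. \<theta>(k,0) * \<theta>(k,j))" for j
  define L where "L x = (\<Sum>j=1..d. u j * x j)" for x
  define X where "X = (\<integral>x. (N x - L x) * x i * \<rho> x \<partial>xspace d)"
  define Y where "Y = (\<integral>x. (f x - N x) * (W x - v) * x i * \<rho> x \<partial>xspace d)"
  define R where "R = d * rr"
  define cX where "cX = rr*CL*R^3/6"
  define cN where "cN = R + CL*R^3/6"
  define cY where "cY = (BB + cN) * (CL*R^2/2) * rr"
  have Nm[measurable]: "N \<in> borel_measurable (xspace d)" unfolding N_def by measurable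
  have Wm[measurable]: "W \<in> borel_measurable (xspace d)" unfolding W_def by measurable
  have Lm[measurable]: "L \<in> borel_measurable (xspace d)" unfolding L_def using comp_meas by measurable
  have bN: "bos N" unfolding N_def by (rule bos_net)
  have bW: "bos W" unfolding W_def by (rule bos_W)
  have bL: "bos L" unfolding L_def by (rule bos_L)
  have bxi: "bos (\<lambda>x. x i)" using bos_comp[OF i1] .
  have xim[measurable]: "(\<lambda>x. x i) \<in> borel_measurable (xspace d)" using comp_meas[OF i1] .
  have gk: "- gradR d m \<sigma> \<rho> f \<theta> (k,i) = (\<integral>x. (f x - N x) * \<theta>(k,0) * \<sigma>1 (pre d \<theta> k x) * x i * \<rho> x \<partial>xspace d)"
    if k: "k < m" for k
  proof -
    have "- gradR d m \<sigma> \<rho> f \<theta> (k,i) = - (\<integral>x. (N x - f x) * \<theta>(k,0) * \<sigma>1 (pre d \<theta> k x) * x i * \<rho> x \<partial>xspace d)"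
      unfolding N_def using grad_formula[OF k i1] by simp
    also have "\<dots> = (\<integral>x. - ((N x - f x) * \<theta>(k,0) * \<sigma>1 (pre d \<theta> k x) * x i * \<rho> x) \<partial>xspace d)"
      by simp
    also have "\<dots> = (\<integral>x. (f x - N x) * \<theta>(k,0) * \<sigma>1 (pre d \<theta> k x) * x i * \<rho> x \<partial>xspace d)"
      by (rule Bochner_Integration.integral_cong) (auto simp: algebra_simps)
    finally show ?thesis .
  qed
  have intk: "integrable (xspace d) (\<lambda>x. 2 * \<theta>(k,i) * ((f x - N x) * \<theta>(k,0) * \<sigma>1 (pre d \<theta> k x) * x i * \<rho> x))" for k
    by (intro intg_bos_c bos_mult bos_diff bos_f bN bos_const bos_sig1 bos_pre bxi) measurable
  have A: "(\<Sum>k<m. 2 * \<theta>(k,i) * (- gradR d m \<sigma> \<rho> f \<theta> (k,i))) = 2 * (\<integral>x. (f x - N x) * W x * x i * \<rho> x \<partial>xspace d)"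
  proof -
    have "(\<Sum>k<m. 2 * \<theta>(k,i) * (- gradR d m \<sigma> \<rho> f \<theta> (k,i)))
        = (\<Sum>k<m. (\<integral>x. 2 * \<theta>(k,i) * ((f x - N x) * \<theta>(k,0) * \<sigma>1 (pre d \<theta> k x) * x i * \<rho> x) \<partial>xspace d))"
      by (rule sum.cong) (simp_all add: gk)
    also have "\<dots> = (\<integral>x. (\<Sum>k<m. 2 * \<theta>(k,i) * ((f x - N x) * \<theta>(k,0) * \<sigma>1 (pre d \<theta> k x) * x i * \<rho> x)) \<partial>xspace d)"
      by (rule sym, rule Bochner_Integration.integral_sum) (use intk in auto)
    also have "\<dots> = (\<integral>x. 2 * ((f x - N x) * W x * x i * \<rho> x) \<partial>xspace d)"
      by (rule Bochner_Integration.integral_cong) (simp_all add: W_def sum_distrib_left sum_distrib_right mult_ac)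
    finally show ?thesis by simp
  qed
  have int1: "integrable (xspace d) (\<lambda>x. (f x - N x) * x i * \<rho> x)"
    by (intro intg_bos bos_mult bos_diff bos_f bN bxi) measurable
  have int2: "integrable (xspace d) (\<lambda>x. (f x - N x) * (W x - v) * x i * \<rho> x)"
    by (intro intg_bos bos_mult bos_diff bos_f bN bW bos_const bxi) measurable
  have int3: "integrable (xspace d) (\<lambda>x. f x * x i * \<rho> x)"
    by (intro intg_bos bos_mult bos_f bxi) measurable
  have int4: "integrable (xspace d) (\<lambda>x. L x * x i * \<rho> x)"
    by (intro intg_bos bos_mult bL bxi) measurable
  have int5: "integrable (xspace d) (\<lambda>x. (N x - L x) * x i * \<rho> x)"
    by (intro intg_bos bos_mult bos_diff bN bL bxi) measurable
  have intjj: "integrable (xspace d) (\<lambda>x. x j * x i * \<rho> x)" if j: "j \<in> {1..d}" for j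
    using comp_meas[OF j] comp_meas[OF i1] by (intro intg_bos bos_mult bos_comp[OF j] bxi borel_measurable_times) auto
  have B1: "(\<integral>x. (f x - N x) * W x * x i * \<rho> x \<partial>xspace d) = v * (\<integral>x. (f x - N x) * x i * \<rho> x \<partial>xspace d) + Y"
  proof -
    have "(\<integral>x. (f x - N x) * W x * x i * \<rho> x \<partial>xspace d)
        = (\<integral>x. v * ((f x - N x) * x i * \<rho> x) + (f x - N x) * (W x - v) * x i * \<rho> x \<partial>xspace d)"
      by (rule Bochner_Integration.integral_cong) (simp_all add: algebra_simps)
    also have "\<dots> = v * (\<integral>x. (f x - N x) * x i * \<rho> x \<partial>xspace d) + Y"
      unfolding Y_def using int1 int2 by simp
    finally show ?thesis .
  qed
  have B2: "(\<integral>x. (f x - N x) * x i * \<rho> x \<partial>xspace d) = (\<integral>x. f x * x i * \<rho> x \<partial>xspace d) - (\<integral>x. L x * x i * \<rho> x \<partial>xspace d) - X"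
  proof -
    have "(\<integral>x. (f x - N x) * x i * \<rho> x \<partial>xspace d)
        = (\<integral>x. f x * x i * \<rho> x - L x * x i * \<rho> x - (N x - L x) * x i * \<rho> x \<partial>xspace d)"
      by (rule Bochner_Integration.integral_cong) (simp_all add: algebra_simps)
    also have "\<dots> = (\<integral>x. f x * x i * \<rho> x \<partial>xspace d) - (\<integral>x. L x * x i * \<rho> x \<partial>xspace d) - X"
      unfolding X_def using int3 int4 int5 by simp
    finally show ?thesis .
  qed
  have B3: "(\<integral>x. L x * x i * \<rho> x \<partial>xspace d) = v"
  proof -
    have "(\<integral>x. L x * x i * \<rho> x \<partial>xspace d) = (\<integral>x. (\<Sum>j=1..d. u j * (x j * x i * \<rho> x)) \<partial>xspace d)"
      by (rule Bochner_Integration.integral_cong) (simp_all add: L_def sum_distrib_right sum_distrib_left mult_ac)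
    also have "\<dots> = (\<Sum>j=1..d. (\<integral>x. u j * (x j * x i * \<rho> x) \<partial>xspace d))"
      by (rule Bochner_Integration.integral_sum) (use intjj in auto)
    also have "\<dots> = (\<Sum>j=1..d. u j * (if j = i then 1 else 0))"
    proof (rule sum.cong)
      fix j assume j: "j \<in> {1..d}"
      show "(\<integral>x. u j * (x j * x i * \<rho> x) \<partial>xspace d) = u j * (if j = i then 1 else 0)"
      proof (cases "j = i")
        case True
        then show ?thesis using rho_second[OF i1] by (simp add: power2_eq_square)
      next
        case False
        then show ?thesis using rho_cross[OF j i1 False] by simp
      qed
    qed simp
    also have "\<dots> = u i" using i1 by (simp add: if_distrib cong: if_cong)
    finally show ?thesis unfolding u_def v_def .
  qed
  have fc: "(\<integral>x. f x * x i * \<rho> x \<partial>xspace d) = 0" using f_corr[OF i] .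
  have G: "(\<Sum>k<m. 2 * \<theta>(k,i) * (- gradR d m \<sigma> \<rho> f \<theta> (k,i))) = 2 * (v * (- v - X) + Y)"
    unfolding A B1 B2 B3 fc by simp
  have G2: "2 * (v * (- v - X) + Y) \<le> X^2 / 2 + 2 * \<bar>Y\<bar>"
  proof -
    have "0 \<le> (2 * v + X)^2" by simp
    moreover have "2 * (v * (- v - X) + Y) = X^2 / 2 - (2 * v + X)^2 / 2 + 2 * Y" by (simp add: power2_eq_square field_simps)
    moreover have "Y \<le> \<bar>Y\<bar>" by simp
    ultimately show ?thesis by linarith
  qed
  have Rnn: "0 \<le> R" unfolding R_def using rr(1) by simp
  have cNnn: "0 \<le> cN" unfolding cN_def using Rnn CL_nonneg by simp
  have zb: "\<bar>pre d \<theta> k x\<bar> \<le> R * Q" if x: "x \<in> space (xspace d)" "\<rho> x \<noteq> 0" and k: "k < m" for k x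
    unfolding R_def using pre_bd[OF x, of \<theta> k Q] th[OF k] by auto
  have ak: "\<bar>\<theta>(k,0)\<bar> \<le> Q" if "k < m" for k using th[OF that] by simp
  have Q3: "Q^3 \<le> Q" using Q by (simp add: power_le_one power3_eq_cube mult_le_one)
  have Lsum: "L x = (\<Sum>k<m. \<theta>(k,0) * pre d \<theta> k x)" for x
    unfolding L_def u_def pre_def by (simp add: sum_distrib_left sum_distrib_right mult_ac) (rule sum.swap)
  have NL: "\<bar>N x - L x\<bar> \<le> m * Q * (CL / 6 * (R * Q)^3)" if x: "x \<in> space (xspace d)" "\<rho> x \<noteq> 0" for x
  proof -
    have "N x - L x = (\<Sum>k<m. \<theta>(k,0) * (\<sigma> (pre d \<theta> k x) - pre d \<theta> k x))"
      unfolding N_def net_pre Lsum by (simp add: sum_subtractf algebra_simps)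
    also have "\<bar>\<dots>\<bar> \<le> (\<Sum>k<m. \<bar>\<theta>(k,0) * (\<sigma> (pre d \<theta> k x) - pre d \<theta> k x)\<bar>)" by (rule sum_abs)
    also have "\<dots> \<le> (\<Sum>k<m. Q * (CL / 6 * (R * Q)^3))"
    proof (rule sum_mono)
      fix k assume "k \<in> {..<m}"
      then have k: "k < m" by simp
      have "\<bar>pre d \<theta> k x\<bar>^3 \<le> (R * Q)^3" using zb[OF x k] by (intro power_mono) auto
      then have ss: "\<bar>\<sigma> (pre d \<theta> k x) - pre d \<theta> k x\<bar> \<le> CL / 6 * (R * Q)^3"
        using T_sig[of "pre d \<theta> k x"] CL_nonneg by (meson order_trans mult_left_mono divide_nonneg_pos zero_less_numeral)
      show "\<bar>\<theta>(k,0) * (\<sigma> (pre d \<theta> k x) - pre d \<theta> k x)\<bar> \<le> Q * (CL / 6 * (R * Q)^3)"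
        unfolding abs_mult by (rule mult_mono) (use ak[OF k] Q ss in auto)
    qed
    also have "\<dots> = m * Q * (CL / 6 * (R * Q)^3)" by simp
    finally show ?thesis .
  qed
  have Xb: "\<bar>X\<bar> \<le> cX * m * Q^4"
    unfolding X_def
  proof (rule int_bdd)
    show "(\<lambda>x. (N x - L x) * x i) \<in> borel_measurable (xspace d)" by measurable
    fix x assume x: "x \<in> space (xspace d)" "\<rho> x \<noteq> 0"
    have "\<bar>(N x - L x) * x i\<bar> \<le> (m * Q * (CL / 6 * (R * Q)^3)) * rr"
      unfolding abs_mult by (rule mult_mono) (use NL[OF x] rr(2)[OF x i1] Q Rnn CL_nonneg in \<open>auto intro!: mult_nonneg_nonneg\<close>)
    also have "\<dots> = cX * m * Q^4" unfolding cX_def by (simp add: power_mult_distrib algebra_simps power4_eq_xxxx power3_eq_cube)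
    finally show "\<bar>(N x - L x) * x i\<bar> \<le> cX * m * Q^4" .
  qed
  have fN: "\<bar>f x - N x\<bar> \<le> (BB + cN) * m * Q^2" if x: "x \<in> space (xspace d)" "\<rho> x \<noteq> 0" for x
  proof -
    have "\<bar>N x\<bar> \<le> (\<Sum>k<m. \<bar>\<theta>(k,0) * \<sigma> (pre d \<theta> k x)\<bar>)" unfolding N_def net_pre by (rule sum_abs)
    also have "\<dots> \<le> (\<Sum>k<m. Q * (Q * cN))"
    proof (rule sum_mono)
      fix k assume "k \<in> {..<m}"
      then have k: "k < m" by simp
      have "\<bar>\<sigma> (pre d \<theta> k x)\<bar> \<le> R * Q + CL / 6 * (R * Q)^3" by (rule sig_bd[OF zb[OF x k]])
      also have "\<dots> \<le> Q * cN"
      proof -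
        have "(R * Q)^3 = R^3 * Q^3" by (simp add: power_mult_distrib)
        also have "\<dots> \<le> R^3 * Q" using Q3 Rnn by (intro mult_left_mono) auto
        finally have "CL / 6 * (R * Q)^3 \<le> CL / 6 * (R^3 * Q)" using CL_nonneg by (intro mult_left_mono) auto
        then show ?thesis unfolding cN_def by (simp add: algebra_simps)
      qed
      finally have ss: "\<bar>\<sigma> (pre d \<theta> k x)\<bar> \<le> Q * cN" .
      show "\<bar>\<theta>(k,0) * \<sigma> (pre d \<theta> k x)\<bar> \<le> Q * (Q * cN)"
        unfolding abs_mult by (rule mult_mono) (use ak[OF k] Q ss in auto)
    qed
    also have "\<dots> = cN * m * Q^2" by (simp add: power2_eq_square)
    finally have "\<bar>N x\<bar> \<le> cN * m * Q^2" .
    moreover have "BB \<le> BB * (m * Q^2)" using BB(1) Q(3) by (simp add: mult_le_cancel_left1)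
    moreover have "\<bar>f x\<bar> \<le> BB" using BB(2)[OF x] .
    ultimately show ?thesis by (simp add: algebra_simps abs_triangle_ineq4[THEN order_trans])
  qed
  have Wv: "\<bar>W x - v\<bar> \<le> CL * R^2 / 2 * Q^3 * (\<Sum>k<m. \<bar>\<theta>(k,i)\<bar>)" if x: "x \<in> space (xspace d)" "\<rho> x \<noteq> 0" for x
  proof -
    have "W x - v = (\<Sum>k<m. \<theta>(k,0) * \<theta>(k,i) * (\<sigma>1 (pre d \<theta> k x) - 1))"
      unfolding W_def v_def by (simp add: sum_subtractf algebra_simps)
    also have "\<bar>\<dots>\<bar> \<le> (\<Sum>k<m. \<bar>\<theta>(k,0) * \<theta>(k,i) * (\<sigma>1 (pre d \<theta> k x) - 1)\<bar>)" by (rule sum_abs)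
    also have "\<dots> \<le> (\<Sum>k<m. CL * R^2 / 2 * Q^3 * \<bar>\<theta>(k,i)\<bar>)"
    proof (rule sum_mono)
      fix k assume "k \<in> {..<m}"
      then have k: "k < m" by simp
      have "(pre d \<theta> k x)^2 \<le> (R * Q)^2"
        using zb[OF x k] by (metis abs_ge_zero power2_abs power_mono)
      then have s1: "\<bar>\<sigma>1 (pre d \<theta> k x) - 1\<bar> \<le> CL / 2 * (R * Q)^2"
        using T_sig1[of "pre d \<theta> k x"] CL_nonneg by (meson order_trans mult_left_mono divide_nonneg_pos zero_less_numeral)
      have "\<bar>\<theta>(k,0) * \<theta>(k,i) * (\<sigma>1 (pre d \<theta> k x) - 1)\<bar> \<le> Q * \<bar>\<theta>(k,i)\<bar> * (CL / 2 * (R * Q)^2)"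
        unfolding abs_mult by (intro mult_mono mult_right_mono) (use ak[OF k] s1 Q in auto)
      also have "\<dots> = CL * R^2 / 2 * Q^3 * \<bar>\<theta>(k,i)\<bar>" by (simp add: power_mult_distrib power2_eq_square power3_eq_cube algebra_simps)
      finally show "\<bar>\<theta>(k,0) * \<theta>(k,i) * (\<sigma>1 (pre d \<theta> k x) - 1)\<bar> \<le> CL * R^2 / 2 * Q^3 * \<bar>\<theta>(k,i)\<bar>" .
    qed
    also have "\<dots> = CL * R^2 / 2 * Q^3 * (\<Sum>k<m. \<bar>\<theta>(k,i)\<bar>)" by (simp add: sum_distrib_left)
    finally show ?thesis .
  qed
  have Yb: "\<bar>Y\<bar> \<le> cY * m * Q^5 * (\<Sum>k<m. \<bar>\<theta>(k,i)\<bar>)"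
    unfolding Y_def
  proof (rule int_bdd)
    show "(\<lambda>x. (f x - N x) * (W x - v) * x i) \<in> borel_measurable (xspace d)" by measurable
    fix x assume x: "x \<in> space (xspace d)" "\<rho> x \<noteq> 0"
    have "\<bar>(f x - N x) * (W x - v) * x i\<bar> \<le> ((BB + cN) * m * Q^2) * (CL * R^2 / 2 * Q^3 * (\<Sum>k<m. \<bar>\<theta>(k,i)\<bar>)) * rr"
      unfolding abs_mult by (intro mult_mono) (use fN[OF x] Wv[OF x] rr(2)[OF x i1] Q Rnn CL_nonneg BB(1) cNnn in \<open>auto intro!: mult_nonneg_nonneg add_nonneg_nonneg sum_nonneg\<close>)
    also have "\<dots> = cY * m * Q^5 * (\<Sum>k<m. \<bar>\<theta>(k,i)\<bar>)" unfolding cY_def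
      by (simp add: algebra_simps power2_eq_square power3_eq_cube numeral_eq_Suc)
    finally show "\<bar>(f x - N x) * (W x - v) * x i\<bar> \<le> cY * m * Q^5 * (\<Sum>k<m. \<bar>\<theta>(k,i)\<bar>)" .
  qed
  have "X^2 \<le> (cX * m * Q^4)^2" using Xb by (metis abs_ge_zero power2_abs power_mono)
  then have "X^2 / 2 + 2 * \<bar>Y\<bar> \<le> (cX * m * Q^4)^2 / 2 + 2 * (cY * m * Q^5 * (\<Sum>k<m. \<bar>\<theta>(k,i)\<bar>))"
    using Yb by linarith
  then show ?thesis using G G2 unfolding cX_def cY_def cN_def R_def by (simp add: algebra_simps)
qed

end


lemma second_moment:
  assumes j: "j \<in> param_idx d m"
  shows "integrable (init_measure d m \<alpha>) (\<lambda>\<theta>. (\<theta> j)^2)"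
    and "(\<integral>\<theta>. (\<theta> j)^2 \<partial>init_measure d m \<alpha>) = (real m powr (-\<alpha>))^2"
proof -
  define s where "s = real m powr (-\<alpha>)"
  define Mi where "Mi = density lborel (normal_density 0 s)"
  have "0 < m" using j unfolding param_idx_def by auto
  then have s0: "0 < s" unfolding s_def by simp
  have pMi: "prob_space Mi" unfolding Mi_def using s0 by (rule prob_space_normal_density)
  have P: "init_measure d m \<alpha> = PiM (param_idx d m) (\<lambda>_. Mi)" unfolding init_measure_def Mi_def s_def ..
  have dist: "distr (init_measure d m \<alpha>) Mi (\<lambda>\<omega>. \<omega> j) = Mi"
    unfolding P by (rule distr_PiM_component) (use pMi j in auto)
  have meas: "(\<lambda>\<omega>. \<omega> j) \<in> measurable (init_measure d m \<alpha>) Mi"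
    unfolding P using j by (rule measurable_component_singleton)
  have sq[measurable]: "(\<lambda>x::real. x^2) \<in> borel_measurable Mi" unfolding Mi_def by simp
  have iMi: "integrable Mi (\<lambda>x::real. x^2)"
  proof -
    have "integrable lborel (\<lambda>x. normal_density 0 s x * (x - 0)^2)" using s0 by (rule integrable_normal_moment)
    then show ?thesis unfolding Mi_def by (subst integrable_density) auto
  qed
  have vMi: "(\<integral>x. x^2 \<partial>Mi) = s^2"
  proof -
    have "(\<integral>x. x^2 \<partial>Mi) = (\<integral>x. normal_density 0 s x * (x - 0)^(2*1) \<partial>lborel)"
      unfolding Mi_def by (subst integral_density) auto
    have "(\<integral>x. normal_density 0 s x * (x - 0)^(2*1) \<partial>lborel) = s^2"
      using s0 by (subst integral_normal_moment_even) (simp_all add: fact_numeral)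
    then show ?thesis using \<open>(\<integral>x. x^2 \<partial>Mi) = _\<close> by simp
  qed
  show "integrable (init_measure d m \<alpha>) (\<lambda>\<theta>. (\<theta> j)^2)"
    using iMi integrable_distr_eq[OF meas sq] dist by simp
  show "(\<integral>\<theta>. (\<theta> j)^2 \<partial>init_measure d m \<alpha>) = (real m powr (-\<alpha>))^2"
    using vMi integral_distr[OF meas sq] dist s_def by simp
qed


lemma init_event:
  assumes m: "1 \<le> m" and d: "2 \<le> d" and \<delta>: "0 < \<delta>"
  shows "\<exists>A\<in>sets (init_measure d m \<alpha>). measure (init_measure d m \<alpha>) A \<ge> 1 - \<delta> \<and>
     (\<forall>\<theta>\<in>A. \<forall>i\<in>{2..d}. (\<Sum>k<m. (\<theta>(k,i))^2) \<le> real (d-1) * real m * (real m powr (-\<alpha>))^2 / \<delta>)"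
proof -
  define P where "P = init_measure d m \<alpha>"
  define s where "s = real m powr (-\<alpha>)"
  define c where "c = real (d-1) * real m * s^2 / \<delta>"
  have s0: "0 < s" unfolding s_def using m by simp
  have pP: "prob_space P" unfolding P_def init_measure_def
    by (rule prob_space_PiM) (use s0 s_def prob_space_normal_density in auto)
  interpret P: prob_space P by (rule pP)
  define u where "u \<theta> = (\<Sum>i\<in>{2..d}. \<Sum>k<m. (\<theta>(k,i))^2)" for \<theta> :: "nat \<times> nat \<Rightarrow> real"
  have idx: "(k,i) \<in> param_idx d m" if "k < m" "i \<in> {2..d}" for k i
    using that unfolding param_idx_def by auto
  have ui: "integrable P u" unfolding u_def P_def
    by (intro Bochner_Integration.integrable_sum second_moment(1) idx) auto
  have um[measurable]: "u \<in> borel_measurable P" using ui by (rule borel_measurable_integrable)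
  have uint: "(\<integral>\<theta>. u \<theta> \<partial>P) = real (d-1) * real m * s^2"
  proof -
    have ik: "integrable P (\<lambda>\<theta>. (\<theta>(k,i))^2)" if "k < m" "i \<in> {2..d}" for k i
      unfolding P_def using second_moment(1) idx that by blast
    have ii: "integrable P (\<lambda>\<theta>. \<Sum>k<m. (\<theta>(k,i))^2)" if "i \<in> {2..d}" for i
      using ik that by (intro Bochner_Integration.integrable_sum) auto
    have "(\<integral>\<theta>. u \<theta> \<partial>P) = (\<Sum>i\<in>{2..d}. (\<integral>\<theta>. (\<Sum>k<m. (\<theta>(k,i))^2) \<partial>P))"
      unfolding u_def by (rule Bochner_Integration.integral_sum) (use ii in auto)
    also have "\<dots> = (\<Sum>i\<in>{2..d}. \<Sum>k<m. (\<integral>\<theta>. (\<theta>(k,i))^2 \<partial>P))"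
      by (rule sum.cong[OF refl], rule Bochner_Integration.integral_sum) (use ik in auto)
    also have "\<dots> = (\<Sum>i\<in>{2..d}. \<Sum>k<m. s^2)"
      unfolding P_def s_def by (intro sum.cong refl second_moment(2) idx) auto
    also have "\<dots> = real (d-1) * real m * s^2" using d by simp
    finally show ?thesis .
  qed
  have c0: "0 < c" unfolding c_def using d m s0 \<delta> by simp
  define A where "A = {\<theta>\<in>space P. u \<theta> < c}"
  have Aev: "A \<in> sets P" unfolding A_def by measurable
  have Bev: "{\<theta>\<in>space P. c \<le> u \<theta>} \<in> sets P" by measurable
  have mk: "measure P {\<theta>\<in>space P. c \<le> u \<theta>} \<le> (\<integral>\<theta>. u \<theta> \<partial>P) / c"
    by (rule integral_Markov_inequality_measure[OF ui Bev]) (auto simp: u_def c0 intro!: sum_nonneg)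
  also have "\<dots> = \<delta>" unfolding uint c_def using d m s0 \<delta> by (simp add: field_simps)
  finally have mk2: "measure P {\<theta>\<in>space P. c \<le> u \<theta>} \<le> \<delta>" .
  have "A = space P - {\<theta>\<in>space P. c \<le> u \<theta>}" unfolding A_def by auto
  then have "measure P A = 1 - measure P {\<theta>\<in>space P. c \<le> u \<theta>}" using P.prob_compl[OF Bev] by simp
  then have mA: "measure P A \<ge> 1 - \<delta>" using mk2 by simp
  have inA: "(\<Sum>k<m. (\<theta>(k,i))^2) \<le> c" if th: "\<theta> \<in> A" and i: "i \<in> {2..d}" for \<theta> i
  proof -
    have "(\<Sum>k<m. (\<theta>(k,i))^2) \<le> u \<theta>" unfolding u_def
      by (rule member_le_sum[of i "{2..d}" "\<lambda>i. \<Sum>k<m. (\<theta>(k,i))^2"]) (use i in \<open>auto intro!: sum_nonneg\<close>)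
    then show ?thesis using th unfolding A_def by simp
  qed
  show ?thesis using Aev mA inA unfolding P_def c_def s_def by blast
qed


context setting
begin

lemma traj_bound:
  fixes \<Phi> :: "real \<Rightarrow> nat \<times> nat \<Rightarrow> real"
  assumes i: "i \<in> {2..d}"
    and ode: "\<And>j s. j \<in> param_idx d m \<Longrightarrow> s \<ge> 0 \<Longrightarrow>
        ((\<lambda>s. \<Phi> s j) has_real_derivative (- gradR d m \<sigma> \<rho> f (\<Phi> s) j)) (at s within {0..})"
    and Q: "0 < Q" "Q \<le> 1" "1 \<le> real m * Q^2"
    and t: "0 < t"
    and bnd: "\<And>s j. 0 \<le> s \<Longrightarrow> s < t \<Longrightarrow> j \<in> param_idx d m \<Longrightarrow> \<bar>\<Phi> s j\<bar> \<le> Q"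
  shows "sqrt (\<Sum>k<m. (\<Phi> t (k,i))^2) \<le> sqrt (\<Sum>k<m. (\<Phi> 0 (k,i))^2) + m * Q^4
     + t * ((rr*CL*(d*rr)^3/6)^2 / 4 * m * Q^4 + ((BB + (d*rr + CL*(d*rr)^3/6)) * (CL*(d*rr)^2/2) * rr) * m * Q^5 * sqrt m)"
proof -
  define cX where "cX = rr*CL*(d*rr)^3/6"
  define cY where "cY = (BB + (d*rr + CL*(d*rr)^3/6)) * (CL*(d*rr)^2/2) * rr"
  define \<eta> where "\<eta> = m * Q^4"
  define S where "S s = (\<Sum>k<m. (\<Phi> s (k,i))^2)" for s
  define G where "G s = (\<Sum>k<m. 2 * \<Phi> s (k,i) * (- gradR d m \<sigma> \<rho> f (\<Phi> s) (k,i)))" for s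
  define \<phi> where "\<phi> s = sqrt (S s + \<eta>^2)" for s
  have m0: "0 < m" using Q(3) by (cases m) auto
  have \<eta>0: "0 < \<eta>" unfolding \<eta>_def using m0 Q by simp
  have idx: "(k,i) \<in> param_idx d m" if "k < m" for k using that i unfolding param_idx_def by auto
  have Snn: "0 \<le> S s" for s unfolding S_def by (intro sum_nonneg) auto
  have dS: "(S has_real_derivative G s) (at s)" if s: "0 < s" for s
  proof -
    have d1: "((\<lambda>s. \<Phi> s (k,i)) has_real_derivative (- gradR d m \<sigma> \<rho> f (\<Phi> s) (k,i))) (at s)" if k: "k < m" for k
    proof -
      have "((\<lambda>s. \<Phi> s (k,i)) has_real_derivative (- gradR d m \<sigma> \<rho> f (\<Phi> s) (k,i))) (at s within {0<..})"
        by (rule has_field_derivative_subset[OF ode[OF idx[OF k]]]) (use s in auto)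
      then show ?thesis using at_within_open[of s "{0<..}"] s by simp
    qed
    then have "((\<lambda>s. (\<Phi> s (k,i))^2) has_real_derivative 2 * \<Phi> s (k,i) * (- gradR d m \<sigma> \<rho> f (\<Phi> s) (k,i))) (at s)"
      if k: "k < m" for k
      using DERIV_power[OF d1[OF k], of 2] by (simp add: mult_ac)
    then show ?thesis unfolding S_def G_def by (intro DERIV_sum) auto
  qed
  have dphi: "(\<phi> has_real_derivative G s / (2 * \<phi> s)) (at s)" if s: "0 < s" for s
  proof -
    have pos: "0 < S s + \<eta>^2" using Snn[of s] \<eta>0 by (simp add: add_nonneg_pos)
    have "((\<lambda>s. S s + \<eta>^2) has_real_derivative G s) (at s)" using DERIV_add[OF dS[OF s] DERIV_const[of "\<eta>^2"]] by simp
    from DERIV_chain2[OF DERIV_real_sqrt[OF pos] this]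
    show ?thesis unfolding \<phi>_def by (simp add: divide_simps mult.commute)
  qed
  have cont: "continuous_on {0..t} \<phi>"
  proof -
    have "continuous_on {0..t} (\<lambda>s. \<Phi> s (k,i))" if k: "k < m" for k
      by (rule DERIV_continuous_on, rule has_field_derivative_subset[OF ode[OF idx[OF k]]]) auto
    then have "continuous_on {0..t} S" unfolding S_def by (intro continuous_intros) auto
    then show ?thesis unfolding \<phi>_def by (intro continuous_intros)
  qed
  obtain l z where z: "0 < z" "z < t" and dz: "(\<phi> has_real_derivative l) (at z)" and mvt: "\<phi> t - \<phi> 0 = (t - 0) * l"
    using MVT[OF t cont] dphi real_differentiable_def by (metis DERIV_isCont)
  have l: "l = G z / (2 * \<phi> z)" using DERIV_unique[OF dz dphi[OF z(1)]] .
  have th: "\<bar>\<Phi> z (k,j)\<bar> \<le> Q" if "k < m" "j \<le> d" for k j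
    using bnd[of z "(k,j)"] z that unfolding param_idx_def by auto
  have Gb: "G z \<le> (cX * m * Q^4)^2/2 + 2 * cY * m * Q^5 * (\<Sum>k<m. \<bar>\<Phi> z (k,i)\<bar>)"
    unfolding G_def cX_def cY_def using Sdot_bound[of i Q m "\<Phi> z", OF i Q th] by (simp add: mult_ac)
  have CS: "(\<Sum>k<m. \<bar>\<Phi> z (k,i)\<bar>) \<le> sqrt m * sqrt (S z)"
  proof -
    have "(\<Sum>k<m. \<bar>\<Phi> z (k,i)\<bar> * 1)^2 \<le> (\<Sum>k<m. \<bar>\<Phi> z (k,i)\<bar>^2) * (\<Sum>k<m. 1^2)"
      by (rule Cauchy_Schwarz_ineq_sum)
    then have "(\<Sum>k<m. \<bar>\<Phi> z (k,i)\<bar>)^2 \<le> S z * m" unfolding S_def by simp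
    then have "sqrt ((\<Sum>k<m. \<bar>\<Phi> z (k,i)\<bar>)^2) \<le> sqrt (S z * m)" by (rule real_sqrt_le_mono)
    then show ?thesis by (simp add: real_sqrt_mult mult_ac)
  qed
  have phz: "\<eta> \<le> \<phi> z" "sqrt (S z) \<le> \<phi> z"
    unfolding \<phi>_def using Snn[of z] \<eta>0 by (auto intro!: real_le_rsqrt real_sqrt_le_mono)
  have cYnn: "0 \<le> cY" unfolding cY_def using BB(1) CL_nonneg rr(1) by simp
  have lb: "l \<le> cX^2 / 4 * m * Q^4 + cY * m * Q^5 * sqrt m"
  proof -
    have p0: "0 < \<phi> z" using phz \<eta>0 by simp
    have "l = ((cX * m * Q^4)^2/2) / (2 * \<phi> z) + (G z - (cX * m * Q^4)^2/2) / (2 * \<phi> z)"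
      unfolding l using p0 by (simp add: field_simps)
    also have "((cX * m * Q^4)^2/2) / (2 * \<phi> z) \<le> ((cX * m * Q^4)^2/2) / (2 * \<eta>)"
      using phz \<eta>0 by (intro divide_left_mono mult_left_mono) auto
    also have "((cX * m * Q^4)^2/2) / (2 * \<eta>) = cX^2 / 4 * m * Q^4"
      unfolding \<eta>_def using m0 Q by (simp add: field_simps power2_eq_square power4_eq_xxxx)
    also have "(G z - (cX * m * Q^4)^2/2) / (2 * \<phi> z) \<le> (2 * cY * m * Q^5 * (sqrt m * sqrt (S z))) / (2 * \<phi> z)"
    proof (rule divide_right_mono)
      have "2 * cY * m * Q^5 * (\<Sum>k<m. \<bar>\<Phi> z (k,i)\<bar>) \<le> 2 * cY * m * Q^5 * (sqrt m * sqrt (S z))"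
        using CS cYnn Q by (intro mult_left_mono) auto
      then show "G z - (cX * m * Q^4)^2/2 \<le> 2 * cY * m * Q^5 * (sqrt m * sqrt (S z))" using Gb by linarith
    qed (use p0 in simp)
    also have "(2 * cY * m * Q^5 * (sqrt m * sqrt (S z))) / (2 * \<phi> z) = (cY * m * Q^5 * sqrt m) * (sqrt (S z) / \<phi> z)"
      by (simp add: field_simps)
    also have "\<dots> \<le> (cY * m * Q^5 * sqrt m) * 1"
      using phz p0 cYnn Q by (intro mult_left_mono) auto
    finally show ?thesis by simp
  qed
  have "sqrt (S t) \<le> \<phi> t" unfolding \<phi>_def by (rule real_sqrt_le_mono) simp
  also have "\<phi> t = \<phi> 0 + t * l" using mvt by simp
  also have "\<phi> 0 \<le> sqrt (S 0) + \<eta>"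
    unfolding \<phi>_def using Snn[of 0] \<eta>0 sqrt_add_le_add_sqrt[of "S 0" "\<eta>^2"] by simp
  also have "t * l \<le> t * (cX^2 / 4 * m * Q^4 + cY * m * Q^5 * sqrt m)" using lb t by (intro mult_left_mono) auto
  finally show ?thesis unfolding S_def \<eta>_def cX_def cY_def by simp
qed

end


lemma powr_facts:
  fixes x :: real assumes x: "0 < x"
  shows "(x powr a)^2 = x powr (2*a)" "(x powr a)^4 = x powr (4*a)" "(x powr a)^5 = x powr (5*a)"
    "sqrt x = x powr (1/2)" "x = x powr 1"
proof -
  have g: "(x powr a)^n = x powr (real n * a)" for n
    using x by (simp add: powr_realpow[symmetric] powr_powr mult.commute)
  show "(x powr a)^2 = x powr (2*a)" using g[of 2] by simp
  show "(x powr a)^4 = x powr (4*a)" using g[of 4] by simp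
  show "(x powr a)^5 = x powr (5*a)" using g[of 5] by simp
  show "sqrt x = x powr (1/2)" using x by (simp add: powr_half_sqrt)
  show "x = x powr 1" using x by simp
qed

theorem proposition3:
  fixes d :: nat and \<rho> f :: "(nat \<Rightarrow> real) \<Rightarrow> real"
    and \<sigma> \<sigma>1 \<sigma>2 \<sigma>3 :: "real \<Rightarrow> real" and CL :: real and \<alpha> :: real
    and \<Phi> :: "nat \<Rightarrow> (nat \<times> nat \<Rightarrow> real) \<Rightarrow> real \<Rightarrow> (nat \<times> nat \<Rightarrow> real)"
  assumes d2: "d \<ge> 2"
    and rho_meas: "\<rho> \<in> borel_measurable (xspace d)"
    and rho_nonneg: "\<And>x. x \<in> space (xspace d) \<Longrightarrow> \<rho> x \<ge> 0"
    and rho_prob: "(\<integral>x. \<rho> x \<partial>xspace d) = 1"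
    and rho_cpt: "\<exists>r. \<forall>x\<in>space (xspace d). (\<exists>i\<in>{1..d}. r < \<bar>x i\<bar>) \<longrightarrow> \<rho> x = 0"
    and rho_second: "\<And>i. i \<in> {1..d} \<Longrightarrow> (\<integral>x. (x i)^2 * \<rho> x \<partial>xspace d) = 1"
    and rho_cross: "\<And>i j. i \<in> {1..d} \<Longrightarrow> j \<in> {1..d} \<Longrightarrow> i \<noteq> j \<Longrightarrow>
                      (\<integral>x. x i * x j * \<rho> x \<partial>xspace d) = 0"
    and f_meas: "f \<in> borel_measurable (xspace d)"
    and f_bdd: "\<exists>B. \<forall>x\<in>space (xspace d). \<rho> x \<noteq> 0 \<longrightarrow> \<bar>f x\<bar> \<le> B"
    and f_corr1: "(\<integral>x. f x * x 1 * \<rho> x \<partial>xspace d) = 1"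
    and f_corr: "\<And>i. i \<in> {2..d} \<Longrightarrow> (\<integral>x. f x * x i * \<rho> x \<partial>xspace d) = 0"
    and sig1: "\<And>z. (\<sigma> has_real_derivative \<sigma>1 z) (at z)"
    and sig2: "\<And>z. (\<sigma>1 has_real_derivative \<sigma>2 z) (at z)"
    and sig3: "\<And>z. (\<sigma>2 has_real_derivative \<sigma>3 z) (at z)"
    and sig0: "\<sigma> 0 = 0" "\<sigma>1 0 = 1" "\<sigma>2 0 = 0"
    and sig3_bdd: "\<And>z. \<bar>\<sigma>3 z\<bar> \<le> CL"
    and flow_init: "\<And>m \<theta>0 j. m \<ge> 2 \<Longrightarrow> j \<in> param_idx d m \<Longrightarrow> \<Phi> m \<theta>0 0 j = \<theta>0 j"
    and flow_ode: "\<And>m \<theta>0 j t. m \<ge> 2 \<Longrightarrow> j \<in> param_idx d m \<Longrightarrow> t \<ge> 0 \<Longrightarrow>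
        ((\<lambda>s. \<Phi> m \<theta>0 s j) has_real_derivative (- gradR d m \<sigma> \<rho> f (\<Phi> m \<theta>0 t) j)) (at t within {0..})"
    and alpha: "1/2 < \<alpha>" "\<alpha> \<le> 3/2"
  shows "\<exists>\<beta>0>0. \<exists>\<delta>0>0. \<forall>\<beta> \<delta>'. 0 < \<beta> \<and> \<beta> < \<beta>0 \<and> 0 < \<delta>' \<and> \<delta>' < \<delta>0 \<longrightarrow>
     (\<forall>\<delta>. 0 < \<delta> \<and> \<delta> < 1 \<longrightarrow>
      (\<exists>M::nat. \<exists>C::real. \<forall>m\<ge>M.
        (let Tp = (2*\<alpha> - 1) / 4 * ln (real m);
             \<alpha>2 = (2*\<alpha> - 1) * \<delta>';
             Tmax = (2*\<alpha> - 1) / (2 - \<delta>') * ln (real m)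
         in \<exists>A \<in> sets (init_measure d m \<alpha>). measure (init_measure d m \<alpha>) A \<ge> 1 - \<delta> \<and>
           (\<forall>\<theta>0\<in>A.
             (let Td = first_time (\<lambda>s. Kfun m (\<Phi> m \<theta>0 s) \<le> 0 \<or> K'fun m (\<Phi> m \<theta>0 s) \<le> 0
                                       \<or> 1 - Kfun m (\<Phi> m \<theta>0 s) \<le> \<beta>) Tp;
                  T2 = first_time (\<lambda>s. qmax d m (\<Phi> m \<theta>0 s) \<ge> real m powr (-(1/2 - \<alpha>2))) 0
              in \<forall>t. \<forall>i\<in>{2..d}. Tp \<le> t \<and> ereal t \<le> Td \<and> ereal t \<le> T2 \<and> t \<le> Tmax \<longrightarrow>
                  sqrt (\<Sum>k<m. (\<Phi> m \<theta>0 t (k,i))^2)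
                    \<le> C * max (1 / real m powr ((2*\<alpha> - 1)/2)) (ln (real m) / real m powr (1 - 5*\<alpha>2)))))))"
proof -
  interpret S: setting d \<rho> f \<sigma> \<sigma>1 \<sigma>2 \<sigma>3 CL
    by unfold_locales (fact assms)+
  define cX where "cX = S.rr*CL*(d*S.rr)^3/6"
  define cY where "cY = (S.BB + (d*S.rr + CL*(d*S.rr)^3/6)) * (CL*(d*S.rr)^2/2) * S.rr"
  define Kc where "Kc = cX^2/4 + cY"
  have cYnn: "0 \<le> cY" unfolding cY_def using S.BB(1) S.CL_nonneg S.rr(1) by simp
  have Kcnn: "0 \<le> Kc" unfolding Kc_def using cYnn by simp
  show ?thesis
    apply (rule exI[of _ "1::real"], rule conjI, simp)
    apply (rule exI[of _ "1/40::real"], rule conjI, simp)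
    apply (intro allI impI)
    subgoal premises prems for \<beta> \<delta>' \<delta>
    proof -
      have h1: "0 < \<delta>'" "\<delta>' < 1/40" "0 < \<delta>" "\<delta> < 1" using prems by auto
      define \<alpha>2 where "\<alpha>2 = (2*\<alpha> - 1) * \<delta>'"
      have a2: "0 < \<alpha>2" "\<alpha>2 < 1/20"
      proof -
        have "0 < 2*\<alpha> - 1" "2*\<alpha> - 1 \<le> 2" using alpha by auto
        then show "0 < \<alpha>2" unfolding \<alpha>2_def using h1 by simp
        have "(2*\<alpha> - 1) * \<delta>' \<le> 2 * \<delta>'" using \<open>2*\<alpha> - 1 \<le> 2\<close> h1 by (intro mult_right_mono) auto
        then show "\<alpha>2 < 1/20" unfolding \<alpha>2_def using h1 by linarith
      qed
      define K0 where "K0 = sqrt (real (d-1) / \<delta>)"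
      define C where "C = K0 + 1 + 2 * Kc"
      show ?thesis
      proof (intro exI[of _ "3::nat"] exI[of _ C] allI impI)
        fix m :: nat assume m3: "3 \<le> m"
        define x where "x = real m"
        have x3: "3 \<le> x" unfolding x_def using m3 by simp
        have x0: "0 < x" using x3 by simp
        have lnx: "1 \<le> ln x"
        proof -
          have "exp 1 \<le> x" using exp_le x3 by linarith
          then show ?thesis using x0 by (simp add: ln_ge_iff)
        qed
        obtain A where A: "A \<in> sets (init_measure d m \<alpha>)" "measure (init_measure d m \<alpha>) A \<ge> 1 - \<delta>"
          "\<And>\<theta> i. \<theta> \<in> A \<Longrightarrow> i \<in> {2..d} \<Longrightarrow> (\<Sum>k<m. (\<theta>(k,i))^2) \<le> real (d-1) * real m * (real m powr (-\<alpha>))^2 / \<delta>"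
          using init_event[of m d \<delta> \<alpha>] m3 d2 h1 by auto
        define Q where "Q = x powr (-(1/2 - \<alpha>2))"
        have Q0: "0 < Q" unfolding Q_def using x0 by simp
        have Q1: "Q \<le> 1"
        proof -
          have "x powr (-(1/2 - \<alpha>2)) \<le> x powr 0" using x3 a2 by (intro powr_mono) auto
          then show ?thesis unfolding Q_def using x0 by simp
        qed
        have pq: "Q^n = x powr (real n * (-(1/2 - \<alpha>2)))" for n :: nat
          unfolding Q_def using x0 by (simp add: powr_realpow[symmetric] powr_powr mult.commute)
        have x1: "x = x powr 1" using x0 by simp
        have xQ2: "x * Q^2 = x powr (2 * \<alpha>2)"
        proof -
          have "x * Q^2 = x powr 1 * x powr (real 2 * (-(1/2 - \<alpha>2)))" using pq[of 2] x1 by simp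
          also have "\<dots> = x powr (1 + real 2 * (-(1/2 - \<alpha>2)))" by (rule powr_add[symmetric])
          also have "\<dots> = x powr (2 * \<alpha>2)" by (rule arg_cong[where f="\<lambda>e. x powr e"]) (simp add: algebra_simps)
          finally show ?thesis .
        qed
        have xQ2': "1 \<le> real m * Q^2" using xQ2 ge_one_powr_ge_zero[of x "2 * \<alpha>2"] x3 a2 unfolding x_def[symmetric] by simp
        define E where "E = x powr (5 * \<alpha>2 - 1)"
        have E0: "0 \<le> E" unfolding E_def by simp
        have xQ4: "x * Q^4 \<le> E"
        proof -
          have "x * Q^4 = x powr 1 * x powr (real 4 * (-(1/2 - \<alpha>2)))" using pq[of 4] x1 by simp
          also have "\<dots> = x powr (1 + real 4 * (-(1/2 - \<alpha>2)))" by (rule powr_add[symmetric])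
          also have "\<dots> = x powr (4 * \<alpha>2 - 1)" by (rule arg_cong[where f="\<lambda>e. x powr e"]) (simp add: algebra_simps)
          also have "\<dots> \<le> E" unfolding E_def using x3 a2 by (intro powr_mono) auto
          finally show ?thesis .
        qed
        have xQ5: "x * Q^5 * sqrt x = E"
        proof -
          have "x * Q^5 * sqrt x = x powr 1 * x powr (real 5 * (-(1/2 - \<alpha>2))) * x powr (1/2)"
            using pq[of 5] x1 powr_facts(4)[OF x0] by simp
          also have "\<dots> = x powr (1 + real 5 * (-(1/2 - \<alpha>2)) + 1/2)" by (simp only: powr_add)
          also have "\<dots> = E" unfolding E_def by (rule arg_cong[where f="\<lambda>e. x powr e"]) (simp add: algebra_simps)
          finally show ?thesis .
        qed
        have b_eq: "ln x / x powr (1 - 5 * \<alpha>2) = ln x * E"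
        proof -
          have "x powr (5 * \<alpha>2 - 1) = inverse (x powr (1 - 5 * \<alpha>2))"
            using powr_minus[of x "1 - 5 * \<alpha>2"] by simp
          then show ?thesis unfolding E_def by (simp add: divide_inverse)
        qed
        show "let Tp = (2*\<alpha> - 1) / 4 * ln (real m);
             \<alpha>2 = (2*\<alpha> - 1) * \<delta>';
             Tmax = (2*\<alpha> - 1) / (2 - \<delta>') * ln (real m)
         in \<exists>A \<in> sets (init_measure d m \<alpha>). measure (init_measure d m \<alpha>) A \<ge> 1 - \<delta> \<and>
           (\<forall>\<theta>0\<in>A.
             (let Td = first_time (\<lambda>s. Kfun m (\<Phi> m \<theta>0 s) \<le> 0 \<or> K'fun m (\<Phi> m \<theta>0 s) \<le> 0
                                       \<or> 1 - Kfun m (\<Phi> m \<theta>0 s) \<le> \<beta>) Tp;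
                  T2 = first_time (\<lambda>s. qmax d m (\<Phi> m \<theta>0 s) \<ge> real m powr (-(1/2 - \<alpha>2))) 0
              in \<forall>t. \<forall>i\<in>{2..d}. Tp \<le> t \<and> ereal t \<le> Td \<and> ereal t \<le> T2 \<and> t \<le> Tmax \<longrightarrow>
                  sqrt (\<Sum>k<m. (\<Phi> m \<theta>0 t (k,i))^2)
                    \<le> C * max (1 / real m powr ((2*\<alpha> - 1)/2)) (ln (real m) / real m powr (1 - 5*\<alpha>2))))"
          unfolding Let_def \<alpha>2_def[symmetric] x_def[symmetric]
        proof (intro bexI[OF _ A(1)] conjI A(2) ballI allI impI)
          fix \<theta>0 t i assume th0: "\<theta>0 \<in> A" and i: "i \<in> {2..d}"
          assume ht: "(2*\<alpha> - 1) / 4 * ln x \<le> t \<and> ereal t \<le> first_time (\<lambda>s. Kfun m (\<Phi> m \<theta>0 s) \<le> 0 \<or> K'fun m (\<Phi> m \<theta>0 s) \<le> 0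
                                       \<or> 1 - Kfun m (\<Phi> m \<theta>0 s) \<le> \<beta>) ((2*\<alpha> - 1) / 4 * ln x)
              \<and> ereal t \<le> first_time (\<lambda>s. qmax d m (\<Phi> m \<theta>0 s) \<ge> x powr (-(1/2 - \<alpha>2))) 0
              \<and> t \<le> (2*\<alpha> - 1) / (2 - \<delta>') * ln x"
          show "sqrt (\<Sum>k<m. (\<Phi> m \<theta>0 t (k,i))^2) \<le> C * max (1 / x powr ((2*\<alpha> - 1)/2)) (ln x / x powr (1 - 5*\<alpha>2))"
          proof -
            have Tp0: "0 < (2*\<alpha> - 1) / 4 * ln x" using alpha lnx by (intro mult_pos_pos) auto
            have t0: "0 < t" using ht Tp0 by linarith
            have tmax: "t \<le> 2 * ln x"
            proof -
              have "(2*\<alpha> - 1) / (2 - \<delta>') \<le> 2" using alpha h1 by (simp add: divide_le_eq)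
              then have "(2*\<alpha> - 1) / (2 - \<delta>') * ln x \<le> 2 * ln x" using lnx by (intro mult_right_mono) auto
              then show ?thesis using ht by linarith
            qed
            have fin: "finite (param_idx d m)" unfolding param_idx_def by simp
            have bnd: "\<bar>\<Phi> m \<theta>0 s j\<bar> \<le> Q" if s: "0 \<le> s" "s < t" and j: "j \<in> param_idx d m" for s j
            proof -
              have "qmax d m (\<Phi> m \<theta>0 s) < Q"
              proof (rule ccontr)
                assume "\<not> qmax d m (\<Phi> m \<theta>0 s) < Q"
                then have "s \<in> {s. 0 \<le> s \<and> qmax d m (\<Phi> m \<theta>0 s) \<ge> x powr (-(1/2 - \<alpha>2))}" using s unfolding Q_def by auto
                then have "first_time (\<lambda>s. qmax d m (\<Phi> m \<theta>0 s) \<ge> x powr (-(1/2 - \<alpha>2))) 0 \<le> ereal s"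
                  unfolding first_time_def by (intro Inf_lower) auto
                moreover have "ereal t \<le> first_time (\<lambda>s. qmax d m (\<Phi> m \<theta>0 s) \<ge> x powr (-(1/2 - \<alpha>2))) 0"
                  using ht by blast
                ultimately have "ereal t \<le> ereal s" by (meson order_trans)
                then show False using s by simp
              qed
              moreover have "\<bar>\<Phi> m \<theta>0 s j\<bar> \<le> qmax d m (\<Phi> m \<theta>0 s)"
                unfolding qmax_def using fin j by (intro Max_ge) auto
              ultimately show ?thesis by simp
            qed
            have ode: "((\<lambda>s. \<Phi> m \<theta>0 s j) has_real_derivative (- gradR d m \<sigma> \<rho> f (\<Phi> m \<theta>0 s) j)) (at s within {0..})"
              if "j \<in> param_idx d m" "s \<ge> 0" for j s
              using flow_ode[of m j s \<theta>0] m3 that by simp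
            have tb: "sqrt (\<Sum>k<m. (\<Phi> m \<theta>0 t (k,i))^2) \<le> sqrt (\<Sum>k<m. (\<Phi> m \<theta>0 0 (k,i))^2) + m * Q^4
               + t * (cX^2 / 4 * m * Q^4 + cY * m * Q^5 * sqrt m)"
              using S.traj_bound[of i m "\<Phi> m \<theta>0" Q t, OF i ode Q0 Q1 xQ2' t0 bnd] unfolding cX_def cY_def by simp
            have S0: "(\<Sum>k<m. (\<Phi> m \<theta>0 0 (k,i))^2) \<le> real (d-1) / \<delta> * (x * (x powr (-\<alpha>))^2)"
            proof -
              have "(\<Sum>k<m. (\<Phi> m \<theta>0 0 (k,i))^2) = (\<Sum>k<m. (\<theta>0 (k,i))^2)"
                using flow_init[of m "(k,i)" \<theta>0 for k] m3 i by (intro sum.cong) (auto simp: param_idx_def)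
              also have "\<dots> \<le> real (d-1) * real m * (real m powr (-\<alpha>))^2 / \<delta>" by (rule A(3)[OF th0 i])
              finally show ?thesis unfolding x_def by simp
            qed
            define a where "a = 1 / x powr ((2*\<alpha> - 1)/2)"
            define b where "b = ln x / x powr (1 - 5*\<alpha>2)"
            have sS0: "sqrt (\<Sum>k<m. (\<Phi> m \<theta>0 0 (k,i))^2) \<le> K0 * a"
            proof -
              have "sqrt (\<Sum>k<m. (\<Phi> m \<theta>0 0 (k,i))^2) \<le> sqrt (real (d-1) / \<delta> * (x * (x powr (-\<alpha>))^2))"
                using S0 by (rule real_sqrt_le_mono)
              also have "\<dots> = K0 * (sqrt x * x powr (-\<alpha>))"
              proof -
                have "sqrt (real (d-1) / \<delta> * (x * (x powr (-\<alpha>))^2)) = sqrt (real (d-1) / \<delta>) * (sqrt x * sqrt ((x powr (-\<alpha>))^2))"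
                  by (simp only: real_sqrt_mult)
                then show ?thesis unfolding K0_def by simp
              qed
              also have "sqrt x * x powr (-\<alpha>) = a"
              proof -
                have "sqrt x * x powr (-\<alpha>) = x powr (1/2) * x powr (- \<alpha>)" using powr_facts(4)[OF x0] by simp
                also have "\<dots> = x powr (1/2 + - \<alpha>)" by (simp only: powr_add)
                also have "\<dots> = x powr (- ((2*\<alpha> - 1)/2))" by (rule arg_cong[where f="\<lambda>e. x powr e"]) (simp add: field_simps)
                also have "\<dots> = a" unfolding a_def by (simp only: powr_minus inverse_eq_divide)
                finally show ?thesis .
              qed
              finally show ?thesis .
            qed
            have br: "cX^2 / 4 * m * Q^4 + cY * m * Q^5 * sqrt m \<le> Kc * E"
            proof -
              have "cX^2 / 4 * (m * Q^4) \<le> cX^2 / 4 * E" using xQ4 unfolding x_def by (intro mult_left_mono) auto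
              moreover have "cY * m * Q^5 * sqrt m = cY * E" using xQ5 unfolding x_def by (simp add: mult_ac)
              moreover have "cX^2 / 4 * m * Q^4 = cX^2 / 4 * (m * Q^4)" by simp
              moreover have "(cX^2 / 4 + cY) * E = cX^2 / 4 * E + cY * E" by (simp add: algebra_simps)
              ultimately show ?thesis unfolding Kc_def by linarith
            qed
            have "t * (cX^2 / 4 * m * Q^4 + cY * m * Q^5 * sqrt m) \<le> (2 * ln x) * (Kc * E)"
            proof -
              have "t * (cX^2 / 4 * m * Q^4 + cY * m * Q^5 * sqrt m) \<le> t * (Kc * E)" using br t0 by (intro mult_left_mono) auto
              also have "\<dots> \<le> (2 * ln x) * (Kc * E)" using tmax Kcnn E0 by (intro mult_right_mono) auto
              finally show ?thesis .
            qed
            moreover have "m * Q^4 \<le> ln x * E"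
            proof -
              have "E * 1 \<le> E * ln x" using mult_left_mono[OF lnx E0] .
              then show ?thesis using xQ4 unfolding x_def by (simp add: mult.commute)
            qed
            moreover have "(1 + 2 * Kc) * (ln x * E) = ln x * E + (2 * ln x) * (Kc * E)" by (simp add: algebra_simps)
            ultimately have "sqrt (\<Sum>k<m. (\<Phi> m \<theta>0 t (k,i))^2) \<le> K0 * a + (1 + 2 * Kc) * (ln x * E)"
              using tb sS0 by linarith
            also have "\<dots> = K0 * a + (1 + 2 * Kc) * b" unfolding b_def b_eq ..
            also have "\<dots> \<le> K0 * max a b + (1 + 2 * Kc) * max a b"
              using Kcnn h1 by (intro add_mono mult_left_mono) (auto simp: K0_def)
            also have "\<dots> = C * max a b" unfolding C_def by (simp add: algebra_simps)
            finally show ?thesis unfolding a_def b_def .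
          qed
        qed
      qed
    qed
    done
qed


end
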